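(* Let $X=\{X_i:1\le i\le n\}$ be a Gaussian random field (jointly normal) with $\mathbb{E}[X_i]=\mu_i$, $\mathrm{Var}(X_i)=\sigma_i^2>0$, and $\mathrm{Cor}(X_i,X_j)<1$ for all $1\le i\neq j\le n$. Then for each $1\le k\le n$ the law of the $k$-th order statistic $X_{(k)}$ is absolutely continuous with respect to Lebesgue measure on $\mathbb{R}$, with density (for a.e. $z$) $$f_{k,n}(z)=\sum_{i=1}^n\sum_{\substack{J\subseteq[n]\setminus\{i\}\\|J|=n-k}}\sigma_i^{-1}\phi\Big(\frac{z-\mu_i}{\sigma_i}\Big)\,\mathbb{P}\Big\{X_j>z\ \forall j\in J,\ X_\ell\le z\ \forall\ell\in[n]\setminus(\{i\}\cup J)\ \Big|\ X_i=z\Big\},$$ where $\phi$ is the standard normal density, $[n]=\{1,\dots,n\}$, and the conditional probability is the Gaussian regression version (i.e. computed via $X_j=\mu_j+\frac{\mathrm{Cov}(X_j,X_i)}{\sigma_i^2}(X_i-\mu_i)+W_{j\setminus i}$ with the residuals $W_{j\setminus i}$ independent of $X_i$). *)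

theory Defs
  imports "HOL-Probability.Probability"
begin

definition gaussian_rv :: "'a measure \<Rightarrow> ('a \<Rightarrow> real) \<Rightarrow> bool" where
  "gaussian_rv M Y \<longleftrightarrow> Y \<in> borel_measurable M \<and>
     (\<exists>m s. (s > 0 \<and> distributed M lborel Y (\<lambda>x. ennreal (normal_density m s x)))
            \<or> (AE \<omega> in M. Y \<omega> = m))"

definition jointly_gaussian :: "'a measure \<Rightarrow> nat set \<Rightarrow> (nat \<Rightarrow> 'a \<Rightarrow> real) \<Rightarrow> bool" where
  "jointly_gaussian M I X \<longleftrightarrow> (\<forall>i\<in>I. X i \<in> borel_measurable M) \<and>
     (\<forall>c :: nat \<Rightarrow> real. gaussian_rv M (\<lambda>\<omega>. \<Sum>i\<in>I. c i * X i \<omega>))"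

definition covariance :: "'a measure \<Rightarrow> ('a \<Rightarrow> real) \<Rightarrow> ('a \<Rightarrow> real) \<Rightarrow> real" where
  "covariance M Y Z = integral\<^sup>L M (\<lambda>\<omega>. (Y \<omega> - integral\<^sup>L M Y) * (Z \<omega> - integral\<^sup>L M Z))"

definition correlation :: "'a measure \<Rightarrow> ('a \<Rightarrow> real) \<Rightarrow> ('a \<Rightarrow> real) \<Rightarrow> real" where
  "correlation M Y Z = covariance M Y Z / sqrt (covariance M Y Y * covariance M Z Z)"

text \<open>k-th order statistic (k-th smallest, 1-based) of x 1, ..., x n.\<close>
definition order_stat :: "nat \<Rightarrow> nat \<Rightarrow> (nat \<Rightarrow> real) \<Rightarrow> real" where
  "order_stat n k x = sort (map x [1..<Suc n]) ! (k - 1)"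

definition regr_resid :: "'a measure \<Rightarrow> (nat \<Rightarrow> 'a \<Rightarrow> real) \<Rightarrow> nat \<Rightarrow> nat \<Rightarrow> 'a \<Rightarrow> real" where
  "regr_resid M X j i \<omega> = X j \<omega> - integral\<^sup>L M (X j)
     - covariance M (X j) (X i) / covariance M (X i) (X i) * (X i \<omega> - integral\<^sup>L M (X i))"

definition cond_prob_regr :: "'a measure \<Rightarrow> (nat \<Rightarrow> 'a \<Rightarrow> real) \<Rightarrow> nat \<Rightarrow> nat \<Rightarrow> nat set \<Rightarrow> real \<Rightarrow> real" where
  "cond_prob_regr M X n i J z =
     (let Xc = (\<lambda>j \<omega>. integral\<^sup>L M (X j)
                + covariance M (X j) (X i) / covariance M (X i) (X i) * (z - integral\<^sup>L M (X i))
                + regr_resid M X j i \<omega>)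
      in measure M {\<omega> \<in> space M. (\<forall>j\<in>J. Xc j \<omega> > z) \<and>
                                  (\<forall>l\<in>{1..n} - ({i} \<union> J). Xc l \<omega> \<le> z)})"

end

theory Submission
  imports Defs
begin



lemma gauss_char:
  assumes P: "prob_space M" and G: "gaussian_rv M L"
  shows "(CLINT \<omega>|M. iexp (L \<omega>)) = iexp (integral\<^sup>L M L) * complex_of_real (exp (- integral\<^sup>L M (\<lambda>\<omega>. (L \<omega> - integral\<^sup>L M L)\<^sup>2) / 2))"
proof -
  interpret prob_space M by fact
  have Lm[measurable]: "L \<in> borel_measurable M" using G by (simp add: gaussian_rv_def)
  from G obtain m s where ms: "(s > 0 \<and> distributed M lborel L (\<lambda>x. ennreal (normal_density m s x))) \<or> (AE \<omega> in M. L \<omega> = m)"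
    by (auto simp: gaussian_rv_def)
  then show ?thesis
  proof
    assume a: "s > 0 \<and> distributed M lborel L (\<lambda>x. ennreal (normal_density m s x))"
    hence s: "s > 0" and D: "distributed M lborel L (\<lambda>x. ennreal (normal_density m s x))" by auto
    have E: "expectation L = m" using normal_distributed_expectation[OF s D] .
    have V: "variance L = s\<^sup>2" using normal_distributed_variance[OF s D] .
    define Z where "Z \<omega> = (L \<omega> - m) / s" for \<omega>
    have DZ: "distributed M lborel Z std_normal_density"
      using normal_standard_normal_convert[OF s] D by (simp add: Z_def[abs_def])
    have Zm[measurable]: "Z \<in> borel_measurable M" unfolding Z_def by measurable
    have Leq: "\<And>\<omega>. iexp (L \<omega>) = iexp m * iexp (s * Z \<omega>)"
    proof -
      fix \<omega> have "s * Z \<omega> = L \<omega> - m" using s by (simp add: Z_def)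
      then have "L \<omega> = m + s * Z \<omega>" by simp
      then show "iexp (L \<omega>) = iexp m * iexp (s * Z \<omega>)"
        by (simp add: exp_add[symmetric] distrib_left)
    qed
    have "(CLINT \<omega>|M. iexp (s * Z \<omega>)) = (CLINT x|distr M lborel Z. iexp (s * x))"
      by (subst integral_distr) auto
    also have "distr M lborel Z = std_normal_distribution"
      using DZ by (simp add: distributed_def)
    also have "(CLINT x|std_normal_distribution. iexp (s * x)) = char std_normal_distribution s"
      by (simp add: char_def)
    also have "\<dots> = complex_of_real (exp (- (s^2) / 2))"
      by (simp add: char_std_normal_distribution)
    finally have "(CLINT \<omega>|M. iexp (L \<omega>)) = iexp m * complex_of_real (exp (- (s^2) / 2))"
      by (simp add: Leq)
    then show ?thesis using E V by simp
  next
    assume ae: "AE \<omega> in M. L \<omega> = m"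
    have E: "integral\<^sup>L M L = m"
      using integral_cong_AE[of L M "\<lambda>_. m"] ae by (simp add: prob_space)
    have C: "(CLINT \<omega>|M. iexp (L \<omega>)) = iexp m"
    proof -
      have "AE \<omega> in M. iexp (L \<omega>) = iexp m" using ae by eventually_elim simp
      then have "(CLINT \<omega>|M. iexp (L \<omega>)) = (CLINT \<omega>|M. iexp m)"
        by (intro integral_cong_AE) auto
      then show ?thesis by (simp add: prob_space)
    qed
    have V: "integral\<^sup>L M (\<lambda>\<omega>. (L \<omega> - integral\<^sup>L M L)\<^sup>2) = 0"
      using integral_cong_AE[of "\<lambda>\<omega>. (L \<omega> - m)\<^sup>2" M "\<lambda>_. 0"] ae E by simp
    show ?thesis using E C V by simp
  qed
qed


lemma iexp_cos: "complex_of_real (cos x) = (iexp x + iexp (-x)) / 2"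
  by (simp add: cos_exp_eq cos_of_real[symmetric] ) 
lemma iexp_sin: "complex_of_real (sin x) = (iexp x - iexp (-x)) / (2 * \<i>)"
  by (simp add: sin_exp_eq sin_of_real[symmetric] )
lemma iexp_add: "iexp (a + b) = iexp a * iexp b"
  by (simp add: distrib_left exp_add)
lemma iexp_diff: "iexp (a - b) = iexp a * iexp (-b)"
  using iexp_add[of a "-b"] by simp
lemma ring_c: "((h::complex) * (1 + k * (E + E'))) * A = h * A + k * (h * (A * E)) + k * (h * (A * E'))"
  by algebra
lemma ring_s: "((h::complex) * (1 + k * (E - E'))) * A = h * A + k * (h * (A * E)) - k * (h * (A * E'))"
  by algebra
lemma cos_h: "complex_of_real (cos t) = (1/2) * (iexp t + iexp (-t))"
  by (subst iexp_cos) simp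
lemma sin_h: "complex_of_real (sin t) = (1/(2*\<i>)) * (iexp t - iexp (-t))"
  by (subst iexp_sin) simp
lemma ptc: "complex_of_real (h * (1 + cos t)) * iexp a = complex_of_real h * iexp a + (1/2) * (complex_of_real h * iexp (a + t)) + (1/2) * (complex_of_real h * iexp (a - t))" for h t a
proof -
  have e: "complex_of_real (h * (1 + cos t)) = of_real h * (1 + (1/2) * (iexp t + iexp (-t)))"
    by (simp only: of_real_mult of_real_add of_real_1 cos_h)
  show ?thesis unfolding e iexp_add[of a t] iexp_diff[of a t]
    by (rule ring_c)
qed
lemma pts: "complex_of_real (h * (1 + sin t)) * iexp a = complex_of_real h * iexp a + (1/(2*\<i>)) * (complex_of_real h * iexp (a + t)) - (1/(2*\<i>)) * (complex_of_real h * iexp (a - t))" for h t a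
proof -
  have e: "complex_of_real (h * (1 + sin t)) = of_real h * (1 + (1/(2*\<i>)) * (iexp t - iexp (-t)))"
    by (simp only: of_real_mult of_real_add of_real_1 sin_h)
  show ?thesis unfolding e iexp_add[of a t] iexp_diff[of a t]
    by (rule ring_s)
qed

lemma norm_iexp[simp]: "norm (iexp x) = 1"
  by (rule norm_exp_i_times)
lemma bnd_int:
  fixes f :: "'a \<Rightarrow> 'b::{banach,second_countable_topology}"
  assumes "prob_space M" "f \<in> borel_measurable M" "\<forall>\<omega>\<in>space M. norm (f \<omega>) \<le> B"
  shows "integrable M f"
proof -
  interpret prob_space M by fact
  show ?thesis using assms(2,3) by (intro integrable_const_bound[where B=B]) auto
qed

lemma prob_density_distr:
  fixes M :: "'a measure" and U :: "'a \<Rightarrow> real" and c :: real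
  assumes P: "prob_space M" and U[measurable]: "U \<in> borel_measurable M"
    and K[measurable]: "K \<in> borel_measurable M" and Kn: "\<forall>\<omega>\<in>space M. 0 \<le> K \<omega>"
    and I: "integrable M K" and c: "integral\<^sup>L M K = c" "c > 0"
  shows "real_distribution (distr (density M (\<lambda>\<omega>. K \<omega> / c)) borel U)"
proof -
  interpret prob_space M by fact
  have "emeasure (density M (\<lambda>\<omega>. K \<omega> / c)) (space (density M (\<lambda>\<omega>. K \<omega> / c))) = (\<integral>\<^sup>+\<omega>. ennreal (K \<omega> / c) \<partial>M)"
    by (simp add: emeasure_density)
  also have "\<dots> = ennreal (LINT \<omega>|M. K \<omega> / c)"
    using Kn c I by (intro nn_integral_eq_integral) auto
  also have "(LINT \<omega>|M. K \<omega> / c) = 1" using c by simp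
  finally have "prob_space (density M (\<lambda>\<omega>. K \<omega> / c))" by (intro prob_spaceI) simp
  then have "prob_space (distr (density M (\<lambda>\<omega>. K \<omega> / c)) borel U)"
    by (intro prob_space.prob_space_distr) auto
  then show ?thesis unfolding real_distribution_def real_distribution_axioms_def by simp
qed

lemma pos1D:
  fixes M :: "'a measure" and N :: "'b measure"
  assumes PM: "prob_space M" and PN: "prob_space N"
    and U[measurable]: "U \<in> borel_measurable M" and V[measurable]: "V \<in> borel_measurable N"
    and K[measurable]: "K \<in> borel_measurable M" and Kb: "\<forall>\<omega>\<in>space M. 0 \<le> K \<omega> \<and> K \<omega> \<le> C"
    and K'[measurable]: "K' \<in> borel_measurable N" and K'b: "\<forall>\<omega>\<in>space N. 0 \<le> K' \<omega> \<and> K' \<omega> \<le> C"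
    and eq: "\<And>s. (CLINT \<omega>|M. complex_of_real (K \<omega>) * iexp (s * U \<omega>)) = (CLINT \<omega>|N. complex_of_real (K' \<omega>) * iexp (s * V \<omega>))"
    and B[measurable]: "B \<in> sets borel" and C0: "0 \<le> C"
  shows "(LINT \<omega>|M. K \<omega> * indicator B (U \<omega>)) = (LINT \<omega>|N. K' \<omega> * indicator B (V \<omega>))"
proof -
  interpret M: prob_space M by fact
  interpret N: prob_space N by fact
  have IK: "integrable M K" using Kb by (intro M.integrable_const_bound[where B=C]) auto
  have IK': "integrable N K'" using K'b by (intro N.integrable_const_bound[where B=C]) auto
  define c where "c = integral\<^sup>L M K"
  have "complex_of_real (integral\<^sup>L M K) = complex_of_real (integral\<^sup>L N K')"
    using eq[of 0] by simp
  then have cc: "integral\<^sup>L N K' = c" by (simp add: c_def)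
  have c0: "c \<ge> 0" unfolding c_def using Kb by (intro integral_nonneg_AE) auto
  show ?thesis
  proof (cases "c = 0")
    case True
    have "AE \<omega> in M. K \<omega> = 0"
      using integral_nonneg_eq_0_iff_AE[OF IK] Kb True c_def by auto
    then have L: "(LINT \<omega>|M. K \<omega> * indicator B (U \<omega>)) = 0"
      by (subst integral_cong_AE[where g="\<lambda>_. 0"]) auto
    have "AE \<omega> in N. K' \<omega> = 0"
      using integral_nonneg_eq_0_iff_AE[OF IK'] K'b True cc by auto
    then have R: "(LINT \<omega>|N. K' \<omega> * indicator B (V \<omega>)) = 0"
      by (subst integral_cong_AE[where g="\<lambda>_. 0"]) auto
    show ?thesis using L R by simp
  next
    case False
    then have cpos: "c > 0" using c0 by simp
    define DM where "DM = distr (density M (\<lambda>\<omega>. K \<omega> / c)) borel U"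
    define DN where "DN = distr (density N (\<lambda>\<omega>. K' \<omega> / c)) borel V"
    have RM: "real_distribution DM" unfolding DM_def
      using prob_density_distr[OF PM U K _ IK c_def[symmetric] cpos] Kb by auto
    have RN: "real_distribution DN" unfolding DN_def
      using prob_density_distr[OF PN V K' _ IK' cc cpos] K'b by auto
    have chM: "char DM s = (CLINT \<omega>|M. complex_of_real (K \<omega>) * iexp (s * U \<omega>)) / c" for s
    proof -
      have "char DM s = (CLINT \<omega>|density M (\<lambda>\<omega>. K \<omega> / c). iexp (s * U \<omega>))"
        unfolding char_def DM_def by (subst integral_distr) auto
      also have "\<dots> = (CLINT \<omega>|M. (K \<omega> / c) *\<^sub>R iexp (s * U \<omega>))"
        using Kb cpos by (subst integral_density) auto
      also have "\<dots> = (CLINT \<omega>|M. complex_of_real (K \<omega>) * iexp (s * U \<omega>) / c)"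
        by (intro Bochner_Integration.integral_cong) (auto simp: scaleR_conv_of_real)
      also have "\<dots> = (CLINT \<omega>|M. complex_of_real (K \<omega>) * iexp (s * U \<omega>)) / c"
        by simp
      finally show ?thesis .
    qed
    have chN: "char DN s = (CLINT \<omega>|N. complex_of_real (K' \<omega>) * iexp (s * V \<omega>)) / c" for s
    proof -
      have "char DN s = (CLINT \<omega>|density N (\<lambda>\<omega>. K' \<omega> / c). iexp (s * V \<omega>))"
        unfolding char_def DN_def by (subst integral_distr) auto
      also have "\<dots> = (CLINT \<omega>|N. (K' \<omega> / c) *\<^sub>R iexp (s * V \<omega>))"
        using K'b cpos by (subst integral_density) auto
      also have "\<dots> = (CLINT \<omega>|N. complex_of_real (K' \<omega>) * iexp (s * V \<omega>) / c)"
        by (intro Bochner_Integration.integral_cong) (auto simp: scaleR_conv_of_real)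
      also have "\<dots> = (CLINT \<omega>|N. complex_of_real (K' \<omega>) * iexp (s * V \<omega>)) / c"
        by simp
      finally show ?thesis .
    qed
    have "char DM = char DN" using chM chN eq by auto
    then have "DM = DN" using Levy_uniqueness[OF RM RN] by simp
    then have E: "(LINT x|DM. (indicator B x :: real)) = (LINT x|DN. (indicator B x :: real))" by simp
    have "(LINT x|DM. (indicator B x :: real)) = (LINT \<omega>|M. K \<omega> * indicator B (U \<omega>)) / c"
    proof -
      have "(LINT x|DM. (indicator B x :: real)) = (LINT \<omega>|density M (\<lambda>\<omega>. K \<omega> / c). (indicator B (U \<omega>) :: real))"
        unfolding DM_def by (rule integral_distr) auto
      also have "\<dots> = (LINT \<omega>|M. (K \<omega> / c) *\<^sub>R indicator B (U \<omega>))"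
        using Kb cpos by (subst integral_density) auto
      also have "\<dots> = (LINT \<omega>|M. K \<omega> * indicator B (U \<omega>) / c)"
        by (intro Bochner_Integration.integral_cong) auto
      finally show ?thesis by simp
    qed
    moreover have "(LINT x|DN. (indicator B x :: real)) = (LINT \<omega>|N. K' \<omega> * indicator B (V \<omega>)) / c"
    proof -
      have "(LINT x|DN. (indicator B x :: real)) = (LINT \<omega>|density N (\<lambda>\<omega>. K' \<omega> / c). (indicator B (V \<omega>) :: real))"
        unfolding DN_def by (rule integral_distr) auto
      also have "\<dots> = (LINT \<omega>|N. (K' \<omega> / c) *\<^sub>R indicator B (V \<omega>))"
        using K'b cpos by (subst integral_density) auto
      also have "\<dots> = (LINT \<omega>|N. K' \<omega> * indicator B (V \<omega>) / c)"
        by (intro Bochner_Integration.integral_cong) auto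
      finally show ?thesis by simp
    qed
    ultimately show ?thesis using E cpos by (simp add: divide_cancel_right)
  qed
qed




lemma int3:
  fixes f g h :: "'a \<Rightarrow> complex"
  assumes "integrable M f" "integrable M g" "integrable M h"
  shows "(CLINT x|M. f x + a * g x + b * h x) = integral\<^sup>L M f + a * integral\<^sup>L M g + b * integral\<^sup>L M h"
  using assms by (simp add: Bochner_Integration.integral_add Bochner_Integration.integral_diff)
lemma int3m:
  fixes f g h :: "'a \<Rightarrow> complex"
  assumes "integrable M f" "integrable M g" "integrable M h"
  shows "(CLINT x|M. f x + a * g x - b * h x) = integral\<^sup>L M f + a * integral\<^sup>L M g - b * integral\<^sup>L M h"
  using assms by (simp add: Bochner_Integration.integral_add Bochner_Integration.integral_diff)

lemma MU_step_aux:
  fixes M :: "'a measure" and N :: "'b measure"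
  assumes PM: "prob_space M" and PN: "prob_space N"
    and U[measurable]: "U \<in> borel_measurable M" and V[measurable]: "V \<in> borel_measurable N"
    and Th[measurable]: "\<theta> \<in> borel_measurable M" and Th'[measurable]: "\<theta>' \<in> borel_measurable N"
    and H[measurable]: "H \<in> borel_measurable M" and Hb: "\<forall>\<omega>\<in>space M. 0 \<le> H \<omega> \<and> H \<omega> \<le> C"
    and H'[measurable]: "H' \<in> borel_measurable N" and H'b: "\<forall>\<omega>\<in>space N. 0 \<le> H' \<omega> \<and> H' \<omega> \<le> C"
    and C0: "0 \<le> C"
    and eq0: "\<And>s. (CLINT \<omega>|M. complex_of_real (H \<omega>) * iexp (s * U \<omega>)) = (CLINT \<omega>|N. complex_of_real (H' \<omega>) * iexp (s * V \<omega>))"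
    and eqp: "\<And>s. (CLINT \<omega>|M. complex_of_real (H \<omega>) * iexp (s * U \<omega> + \<theta> \<omega>)) = (CLINT \<omega>|N. complex_of_real (H' \<omega>) * iexp (s * V \<omega> + \<theta>' \<omega>))"
    and eqm: "\<And>s. (CLINT \<omega>|M. complex_of_real (H \<omega>) * iexp (s * U \<omega> - \<theta> \<omega>)) = (CLINT \<omega>|N. complex_of_real (H' \<omega>) * iexp (s * V \<omega> - \<theta>' \<omega>))"
    and B[measurable]: "B \<in> sets borel"
  shows "(CLINT \<omega>|M. complex_of_real (H \<omega> * indicator B (U \<omega>)) * iexp (\<theta> \<omega>))
       = (CLINT \<omega>|N. complex_of_real (H' \<omega> * indicator B (V \<omega>)) * iexp (\<theta>' \<omega>))"
proof -
  interpret M: prob_space M by fact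
  interpret N: prob_space N by fact
  have iM: "integrable M (\<lambda>\<omega>. complex_of_real (H \<omega>) * iexp (g \<omega>))" if [measurable]: "g \<in> borel_measurable M" for g
    by (rule bnd_int[OF PM, where B=C]) (use Hb in \<open>auto simp: norm_mult\<close>)
  have iN: "integrable N (\<lambda>\<omega>. complex_of_real (H' \<omega>) * iexp (g \<omega>))" if [measurable]: "g \<in> borel_measurable N" for g
    by (rule bnd_int[OF PN, where B=C]) (use H'b in \<open>auto simp: norm_mult\<close>)
  have rM: "integrable M (\<lambda>\<omega>. H \<omega> * indicator B (U \<omega>) * g \<omega>)" if [measurable]: "g \<in> borel_measurable M" "\<forall>\<omega>\<in>space M. \<bar>g \<omega>\<bar> \<le> 1" for g
  proof (rule bnd_int[OF PM, where B=C])
    show "(\<lambda>\<omega>. H \<omega> * indicator B (U \<omega>) * g \<omega>) \<in> borel_measurable M" by measurable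
    show "\<forall>\<omega>\<in>space M. norm (H \<omega> * indicator B (U \<omega>) * g \<omega>) \<le> C"
    proof
      fix \<omega> assume w: "\<omega> \<in> space M"
      have "\<bar>H \<omega> * g \<omega>\<bar> \<le> H \<omega>" using Hb that(2) w
        by (simp add: abs_mult mult_left_le)
      then show "norm (H \<omega> * indicator B (U \<omega>) * g \<omega>) \<le> C" using Hb w
        by (cases "U \<omega> \<in> B") auto
    qed
  qed
  have rN: "integrable N (\<lambda>\<omega>. H' \<omega> * indicator B (V \<omega>) * g \<omega>)" if [measurable]: "g \<in> borel_measurable N" "\<forall>\<omega>\<in>space N. \<bar>g \<omega>\<bar> \<le> 1" for g
  proof (rule bnd_int[OF PN, where B=C])
    show "(\<lambda>\<omega>. H' \<omega> * indicator B (V \<omega>) * g \<omega>) \<in> borel_measurable N" by measurable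
    show "\<forall>\<omega>\<in>space N. norm (H' \<omega> * indicator B (V \<omega>) * g \<omega>) \<le> C"
    proof
      fix \<omega> assume w: "\<omega> \<in> space N"
      have "\<bar>H' \<omega> * g \<omega>\<bar> \<le> H' \<omega>" using H'b that(2) w
        by (simp add: abs_mult mult_left_le)
      then show "norm (H' \<omega> * indicator B (V \<omega>) * g \<omega>) \<le> C" using H'b w
        by (cases "V \<omega> \<in> B") auto
    qed
  qed
  have pa: "(LINT \<omega>|M. H \<omega> * indicator B (U \<omega>)) = (LINT \<omega>|N. H' \<omega> * indicator B (V \<omega>))"
    by (rule pos1D[OF PM PN U V H Hb H' H'b eq0 B C0])
  have bnd2: "0 \<le> h * (1 + g) \<and> h * (1 + g) \<le> 2 * C" if "0 \<le> h" "h \<le> C" "\<bar>g\<bar> \<le> 1" for h g :: real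
  proof -
    have "0 \<le> 1 + g" "1 + g \<le> 2" using that(3) by auto
    then show ?thesis using that mult_mono[of h C "1+g" 2] by (auto simp: mult.commute)
  qed
  have cbM: "\<forall>\<omega>\<in>space M. 0 \<le> H \<omega> * (1 + cos (\<theta> \<omega>)) \<and> H \<omega> * (1 + cos (\<theta> \<omega>)) \<le> 2 * C"
    using Hb bnd2[of "H _" "cos (\<theta> _)"] by auto
  have cbN: "\<forall>\<omega>\<in>space N. 0 \<le> H' \<omega> * (1 + cos (\<theta>' \<omega>)) \<and> H' \<omega> * (1 + cos (\<theta>' \<omega>)) \<le> 2 * C"
    using H'b bnd2[of "H' _" "cos (\<theta>' _)"] by auto
  have sbM: "\<forall>\<omega>\<in>space M. 0 \<le> H \<omega> * (1 + sin (\<theta> \<omega>)) \<and> H \<omega> * (1 + sin (\<theta> \<omega>)) \<le> 2 * C"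
    using Hb bnd2[of "H _" "sin (\<theta> _)"] by auto
  have sbN: "\<forall>\<omega>\<in>space N. 0 \<le> H' \<omega> * (1 + sin (\<theta>' \<omega>)) \<and> H' \<omega> * (1 + sin (\<theta>' \<omega>)) \<le> 2 * C"
    using H'b bnd2[of "H' _" "sin (\<theta>' _)"] by auto
  have eqc: "(CLINT \<omega>|M. complex_of_real (H \<omega> * (1 + cos (\<theta> \<omega>))) * iexp (s * U \<omega>))
     = (CLINT \<omega>|N. complex_of_real (H' \<omega> * (1 + cos (\<theta>' \<omega>))) * iexp (s * V \<omega>))" for s
  proof -
    have "(CLINT \<omega>|M. complex_of_real (H \<omega> * (1 + cos (\<theta> \<omega>))) * iexp (s * U \<omega>))
      = (CLINT \<omega>|M. complex_of_real (H \<omega>) * iexp (s * U \<omega>) + (1/2) * (complex_of_real (H \<omega>) * iexp (s * U \<omega> + \<theta> \<omega>)) + (1/2) * (complex_of_real (H \<omega>) * iexp (s * U \<omega> - \<theta> \<omega>)))"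
      by (simp only: ptc)
    also have "\<dots> = (CLINT \<omega>|M. complex_of_real (H \<omega>) * iexp (s * U \<omega>)) + (1/2) * (CLINT \<omega>|M. complex_of_real (H \<omega>) * iexp (s * U \<omega> + \<theta> \<omega>)) + (1/2) * (CLINT \<omega>|M. complex_of_real (H \<omega>) * iexp (s * U \<omega> - \<theta> \<omega>))"
      by (rule int3; rule iM; measurable)
    also have "\<dots> = (CLINT \<omega>|N. complex_of_real (H' \<omega>) * iexp (s * V \<omega>)) + (1/2) * (CLINT \<omega>|N. complex_of_real (H' \<omega>) * iexp (s * V \<omega> + \<theta>' \<omega>)) + (1/2) * (CLINT \<omega>|N. complex_of_real (H' \<omega>) * iexp (s * V \<omega> - \<theta>' \<omega>))"
      by (simp only: eq0 eqp eqm)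
    also have "\<dots> = (CLINT \<omega>|N. complex_of_real (H' \<omega>) * iexp (s * V \<omega>) + (1/2) * (complex_of_real (H' \<omega>) * iexp (s * V \<omega> + \<theta>' \<omega>)) + (1/2) * (complex_of_real (H' \<omega>) * iexp (s * V \<omega> - \<theta>' \<omega>)))"
      by (rule int3[symmetric]; rule iN; measurable)
    also have "\<dots> = (CLINT \<omega>|N. complex_of_real (H' \<omega> * (1 + cos (\<theta>' \<omega>))) * iexp (s * V \<omega>))"
      by (simp only: ptc)
    finally show ?thesis .
  qed
  have eqs: "(CLINT \<omega>|M. complex_of_real (H \<omega> * (1 + sin (\<theta> \<omega>))) * iexp (s * U \<omega>))
     = (CLINT \<omega>|N. complex_of_real (H' \<omega> * (1 + sin (\<theta>' \<omega>))) * iexp (s * V \<omega>))" for s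
  proof -
    have "(CLINT \<omega>|M. complex_of_real (H \<omega> * (1 + sin (\<theta> \<omega>))) * iexp (s * U \<omega>))
      = (CLINT \<omega>|M. complex_of_real (H \<omega>) * iexp (s * U \<omega>) + (1/(2*\<i>)) * (complex_of_real (H \<omega>) * iexp (s * U \<omega> + \<theta> \<omega>)) - (1/(2*\<i>)) * (complex_of_real (H \<omega>) * iexp (s * U \<omega> - \<theta> \<omega>)))"
      by (simp only: pts)
    also have "\<dots> = (CLINT \<omega>|M. complex_of_real (H \<omega>) * iexp (s * U \<omega>)) + (1/(2*\<i>)) * (CLINT \<omega>|M. complex_of_real (H \<omega>) * iexp (s * U \<omega> + \<theta> \<omega>)) - (1/(2*\<i>)) * (CLINT \<omega>|M. complex_of_real (H \<omega>) * iexp (s * U \<omega> - \<theta> \<omega>))"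
      by (rule int3m; rule iM; measurable)
    also have "\<dots> = (CLINT \<omega>|N. complex_of_real (H' \<omega>) * iexp (s * V \<omega>)) + (1/(2*\<i>)) * (CLINT \<omega>|N. complex_of_real (H' \<omega>) * iexp (s * V \<omega> + \<theta>' \<omega>)) - (1/(2*\<i>)) * (CLINT \<omega>|N. complex_of_real (H' \<omega>) * iexp (s * V \<omega> - \<theta>' \<omega>))"
      by (simp only: eq0 eqp eqm)
    also have "\<dots> = (CLINT \<omega>|N. complex_of_real (H' \<omega>) * iexp (s * V \<omega>) + (1/(2*\<i>)) * (complex_of_real (H' \<omega>) * iexp (s * V \<omega> + \<theta>' \<omega>)) - (1/(2*\<i>)) * (complex_of_real (H' \<omega>) * iexp (s * V \<omega> - \<theta>' \<omega>)))"
      by (rule int3m[symmetric]; rule iN; measurable)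
    also have "\<dots> = (CLINT \<omega>|N. complex_of_real (H' \<omega> * (1 + sin (\<theta>' \<omega>))) * iexp (s * V \<omega>))"
      by (simp only: pts)
    finally show ?thesis .
  qed
  have C2: "0 \<le> 2 * C" using C0 by simp
  have pc: "(LINT \<omega>|M. H \<omega> * (1 + cos (\<theta> \<omega>)) * indicator B (U \<omega>)) = (LINT \<omega>|N. H' \<omega> * (1 + cos (\<theta>' \<omega>)) * indicator B (V \<omega>))"
    by (rule pos1D[OF PM PN U V _ cbM _ cbN eqc B C2]) measurable
  have ps: "(LINT \<omega>|M. H \<omega> * (1 + sin (\<theta> \<omega>)) * indicator B (U \<omega>)) = (LINT \<omega>|N. H' \<omega> * (1 + sin (\<theta>' \<omega>)) * indicator B (V \<omega>))"
    by (rule pos1D[OF PM PN U V _ sbM _ sbN eqs B C2]) measurable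
  have e1: "H \<omega> * (1 + g) * indicator B (U \<omega>) = H \<omega> * indicator B (U \<omega>) * 1 + H \<omega> * indicator B (U \<omega>) * g" for \<omega> g
    by (simp add: algebra_simps)
  have e2: "H' \<omega> * (1 + g) * indicator B (V \<omega>) = H' \<omega> * indicator B (V \<omega>) * 1 + H' \<omega> * indicator B (V \<omega>) * g" for \<omega> g
    by (simp add: algebra_simps)
  have cosM: "(LINT \<omega>|M. H \<omega> * indicator B (U \<omega>) * cos (\<theta> \<omega>)) = (LINT \<omega>|N. H' \<omega> * indicator B (V \<omega>) * cos (\<theta>' \<omega>))"
  proof -
    have "(LINT \<omega>|M. H \<omega> * (1 + cos (\<theta> \<omega>)) * indicator B (U \<omega>)) = (LINT \<omega>|M. H \<omega> * indicator B (U \<omega>) * 1) + (LINT \<omega>|M. H \<omega> * indicator B (U \<omega>) * cos (\<theta> \<omega>))"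
      unfolding e1 by (rule Bochner_Integration.integral_add; rule rM) auto
    moreover have "(LINT \<omega>|N. H' \<omega> * (1 + cos (\<theta>' \<omega>)) * indicator B (V \<omega>)) = (LINT \<omega>|N. H' \<omega> * indicator B (V \<omega>) * 1) + (LINT \<omega>|N. H' \<omega> * indicator B (V \<omega>) * cos (\<theta>' \<omega>))"
      unfolding e2 by (rule Bochner_Integration.integral_add; rule rN) auto
    ultimately show ?thesis using pc pa by simp
  qed
  have sinM: "(LINT \<omega>|M. H \<omega> * indicator B (U \<omega>) * sin (\<theta> \<omega>)) = (LINT \<omega>|N. H' \<omega> * indicator B (V \<omega>) * sin (\<theta>' \<omega>))"
  proof -
    have "(LINT \<omega>|M. H \<omega> * (1 + sin (\<theta> \<omega>)) * indicator B (U \<omega>)) = (LINT \<omega>|M. H \<omega> * indicator B (U \<omega>) * 1) + (LINT \<omega>|M. H \<omega> * indicator B (U \<omega>) * sin (\<theta> \<omega>))"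
      unfolding e1 by (rule Bochner_Integration.integral_add; rule rM) auto
    moreover have "(LINT \<omega>|N. H' \<omega> * (1 + sin (\<theta>' \<omega>)) * indicator B (V \<omega>)) = (LINT \<omega>|N. H' \<omega> * indicator B (V \<omega>) * 1) + (LINT \<omega>|N. H' \<omega> * indicator B (V \<omega>) * sin (\<theta>' \<omega>))"
      unfolding e2 by (rule Bochner_Integration.integral_add; rule rN) auto
    ultimately show ?thesis using ps pa by simp
  qed
  have eul: "complex_of_real h * iexp t = complex_of_real (h * cos t) + \<i> * complex_of_real (h * sin t)" for h t
    by (simp add: exp_Euler cos_of_real sin_of_real algebra_simps)
  have "(CLINT \<omega>|M. complex_of_real (H \<omega> * indicator B (U \<omega>)) * iexp (\<theta> \<omega>))
     = (CLINT \<omega>|M. complex_of_real (H \<omega> * indicator B (U \<omega>) * cos (\<theta> \<omega>)) + \<i> * complex_of_real (H \<omega> * indicator B (U \<omega>) * sin (\<theta> \<omega>)))"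
    by (simp only: eul)
  also have "\<dots> = complex_of_real (LINT \<omega>|M. H \<omega> * indicator B (U \<omega>) * cos (\<theta> \<omega>)) + \<i> * complex_of_real (LINT \<omega>|M. H \<omega> * indicator B (U \<omega>) * sin (\<theta> \<omega>))"
    by (subst Bochner_Integration.integral_add) (auto intro!: rM integrable_mult_right simp del: of_real_mult)
  also have "\<dots> = complex_of_real (LINT \<omega>|N. H' \<omega> * indicator B (V \<omega>) * cos (\<theta>' \<omega>)) + \<i> * complex_of_real (LINT \<omega>|N. H' \<omega> * indicator B (V \<omega>) * sin (\<theta>' \<omega>))"
    by (simp only: cosM sinM)
  also have "\<dots> = (CLINT \<omega>|N. complex_of_real (H' \<omega> * indicator B (V \<omega>) * cos (\<theta>' \<omega>)) + \<i> * complex_of_real (H' \<omega> * indicator B (V \<omega>) * sin (\<theta>' \<omega>)))"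
    by (subst Bochner_Integration.integral_add) (auto intro!: rN integrable_mult_right simp del: of_real_mult)
  also have "\<dots> = (CLINT \<omega>|N. complex_of_real (H' \<omega> * indicator B (V \<omega>)) * iexp (\<theta>' \<omega>))"
    by (simp only: eul)
  finally show ?thesis .
qed

lemma MU:
  fixes M :: "'a measure" and N :: "'b measure" and Y :: "nat \<Rightarrow> 'a \<Rightarrow> real" and Y' :: "nat \<Rightarrow> 'b \<Rightarrow> real"
  assumes PM: "prob_space M" and PN: "prob_space N" and fin: "finite I"
  shows "(\<forall>j\<in>I. Y j \<in> borel_measurable M) \<Longrightarrow> (\<forall>j\<in>I. Y' j \<in> borel_measurable N)
    \<Longrightarrow> H \<in> borel_measurable M \<Longrightarrow> \<forall>\<omega>\<in>space M. 0 \<le> H \<omega> \<and> H \<omega> \<le> C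
    \<Longrightarrow> H' \<in> borel_measurable N \<Longrightarrow> \<forall>\<omega>\<in>space N. 0 \<le> H' \<omega> \<and> H' \<omega> \<le> C \<Longrightarrow> 0 \<le> C
    \<Longrightarrow> (\<And>t. (CLINT \<omega>|M. complex_of_real (H \<omega>) * iexp (\<Sum>j\<in>I. t j * Y j \<omega>)) = (CLINT \<omega>|N. complex_of_real (H' \<omega>) * iexp (\<Sum>j\<in>I. t j * Y' j \<omega>)))
    \<Longrightarrow> (\<forall>j\<in>I. B j \<in> sets borel)
    \<Longrightarrow> (LINT \<omega>|M. H \<omega> * (\<Prod>j\<in>I. indicator (B j) (Y j \<omega>))) = (LINT \<omega>|N. H' \<omega> * (\<Prod>j\<in>I. indicator (B j) (Y' j \<omega>)))"
  using fin
proof (induction I arbitrary: H H' C rule: finite_induct)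
  case empty
  then have "complex_of_real (integral\<^sup>L M H) = complex_of_real (integral\<^sup>L N H')" by simp
  then show ?case by simp
next
  case (insert j I)
  note Ym = insert.prems(1) and Y'm = insert.prems(2)
  have Yj[measurable]: "Y j \<in> borel_measurable M" "Y' j \<in> borel_measurable N" using Ym Y'm by auto
  have [measurable]: "H \<in> borel_measurable M" "H' \<in> borel_measurable N" using insert.prems by auto
  have Bj[measurable]: "B j \<in> sets borel" using insert.prems by auto
  have Hb: "\<forall>\<omega>\<in>space M. 0 \<le> H \<omega> \<and> H \<omega> \<le> C" and H'b: "\<forall>\<omega>\<in>space N. 0 \<le> H' \<omega> \<and> H' \<omega> \<le> C"
    and C0: "0 \<le> C" using insert.prems by auto
  note hyp = insert.prems(8)
  have th[measurable]: "(\<lambda>\<omega>. \<Sum>k\<in>I. t k * Y k \<omega>) \<in> borel_measurable M" for t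
    using Ym by (intro borel_measurable_sum borel_measurable_times) auto
  have th'[measurable]: "(\<lambda>\<omega>. \<Sum>k\<in>I. t k * Y' k \<omega>) \<in> borel_measurable N" for t
    using Y'm by (intro borel_measurable_sum borel_measurable_times) auto
  have s0: "(\<Sum>k\<in>insert j I. (if k = j then s else 0) * Z k) = s * Z j" for s and Z :: "nat \<Rightarrow> real"
    using insert.hyps by (simp add: sum.insert) (intro sum.neutral, auto)
  have sp: "(\<Sum>k\<in>insert j I. (t(j := s)) k * Z k) = s * Z j + (\<Sum>k\<in>I. t k * Z k)" for s t and Z :: "nat \<Rightarrow> real"
    using insert.hyps by (simp add: sum.insert) (intro sum.cong, auto)
  have sm: "(\<Sum>k\<in>insert j I. (if k = j then s else - t k) * Z k) = s * Z j - (\<Sum>k\<in>I. t k * Z k)" for s t and Z :: "nat \<Rightarrow> real"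
  proof -
    have "(\<Sum>k\<in>I. (if k = j then s else - t k) * Z k) = (\<Sum>k\<in>I. - (t k * Z k))"
      using insert.hyps by (intro sum.cong) auto
    then show ?thesis using insert.hyps by (simp add: sum.insert sum_negf)
  qed
  have IHhyp: "(CLINT \<omega>|M. complex_of_real (H \<omega> * indicator (B j) (Y j \<omega>)) * iexp (\<Sum>k\<in>I. t k * Y k \<omega>))
     = (CLINT \<omega>|N. complex_of_real (H' \<omega> * indicator (B j) (Y' j \<omega>)) * iexp (\<Sum>k\<in>I. t k * Y' k \<omega>))" for t
  proof (rule MU_step_aux[OF PM PN Yj th th' _ Hb _ H'b C0 _ _ _ Bj])
    show "(CLINT \<omega>|M. complex_of_real (H \<omega>) * iexp (s * Y j \<omega>)) = (CLINT \<omega>|N. complex_of_real (H' \<omega>) * iexp (s * Y' j \<omega>))" for s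
      using hyp[of "\<lambda>k. if k = j then s else 0"] by (simp only: s0)
    show "(CLINT \<omega>|M. complex_of_real (H \<omega>) * iexp (s * Y j \<omega> + (\<Sum>k\<in>I. t k * Y k \<omega>))) = (CLINT \<omega>|N. complex_of_real (H' \<omega>) * iexp (s * Y' j \<omega> + (\<Sum>k\<in>I. t k * Y' k \<omega>)))" for s
      using hyp[of "t(j := s)"] by (simp only: sp)
    show "(CLINT \<omega>|M. complex_of_real (H \<omega>) * iexp (s * Y j \<omega> - (\<Sum>k\<in>I. t k * Y k \<omega>))) = (CLINT \<omega>|N. complex_of_real (H' \<omega>) * iexp (s * Y' j \<omega> - (\<Sum>k\<in>I. t k * Y' k \<omega>)))" for s
      using hyp[of "\<lambda>k. if k = j then s else - t k"] by (simp only: sm)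
  qed auto
  have IH: "(LINT \<omega>|M. (H \<omega> * indicator (B j) (Y j \<omega>)) * (\<Prod>k\<in>I. indicator (B k) (Y k \<omega>)))
    = (LINT \<omega>|N. (H' \<omega> * indicator (B j) (Y' j \<omega>)) * (\<Prod>k\<in>I. indicator (B k) (Y' k \<omega>)))"
  proof (rule insert.IH)
    show "\<forall>\<omega>\<in>space M. 0 \<le> H \<omega> * indicator (B j) (Y j \<omega>) \<and> H \<omega> * indicator (B j) (Y j \<omega>) \<le> C"
      using Hb C0 by (auto simp: indicator_def)
    show "\<forall>\<omega>\<in>space N. 0 \<le> H' \<omega> * indicator (B j) (Y' j \<omega>) \<and> H' \<omega> * indicator (B j) (Y' j \<omega>) \<le> C"
      using H'b C0 by (auto simp: indicator_def)
  qed (use insert.prems IHhyp in auto)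
  show ?case using IH insert.hyps by (simp add: prod.insert mult.assoc mult.left_commute)
qed




lemma gauss_L2:
  assumes P: "prob_space M" and G: "gaussian_rv M L"
  shows "integrable M L \<and> integrable M (\<lambda>\<omega>. (L \<omega>)\<^sup>2)"
proof -
  interpret prob_space M by fact
  have Lm[measurable]: "L \<in> borel_measurable M" using G by (simp add: gaussian_rv_def)
  from G obtain m s where ms: "(s > 0 \<and> distributed M lborel L (\<lambda>x. ennreal (normal_density m s x))) \<or> (AE \<omega> in M. L \<omega> = m)"
    by (auto simp: gaussian_rv_def)
  then show ?thesis
  proof
    assume a: "s > 0 \<and> distributed M lborel L (\<lambda>x. ennreal (normal_density m s x))"
    hence D: "distributed M lborel L (\<lambda>x. ennreal (normal_density m s x))" by auto
    have "integrable lborel (\<lambda>x. normal_density m s x * x)" using a by (intro integrable_normal_moment_nz_1) auto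
    then have i1: "integrable M L"
      using distributed_integrable[OF D, of "\<lambda>x. x"] a by simp
    have "integrable lborel (\<lambda>x. normal_density m s x * (x - m)^2)" using a by (intro integrable_normal_moment) auto
    then have "integrable M (\<lambda>\<omega>. (L \<omega> - m)^2)"
      using distributed_integrable[OF D, of "\<lambda>x. (x - m)^2"] a by simp
    moreover have "(\<lambda>\<omega>. (L \<omega>)\<^sup>2) = (\<lambda>\<omega>. (L \<omega> - m)^2 + 2 * m * L \<omega> - m\<^sup>2)"
      by (auto simp: power2_eq_square algebra_simps)
    ultimately have "integrable M (\<lambda>\<omega>. (L \<omega>)\<^sup>2)" using i1 by simp
    then show ?thesis using i1 by simp
  next
    assume ae: "AE \<omega> in M. L \<omega> = m"
    have "integrable M L" using ae by (intro integrable_const_bound[where B="\<bar>m\<bar>"]) auto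
    moreover have "integrable M (\<lambda>\<omega>. (L \<omega>)\<^sup>2)" using ae by (intro integrable_const_bound[where B="m\<^sup>2"]) auto
    ultimately show ?thesis by simp
  qed
qed

lemma integrable_prod_L2:
  fixes f g :: "'a \<Rightarrow> real"
  assumes [measurable]: "f \<in> borel_measurable M" "g \<in> borel_measurable M"
    and "integrable M (\<lambda>x. (f x)\<^sup>2)" "integrable M (\<lambda>x. (g x)\<^sup>2)"
  shows "integrable M (\<lambda>x. f x * g x)"
proof (rule Bochner_Integration.integrable_bound[of _ "\<lambda>x. (f x)\<^sup>2 + (g x)\<^sup>2"])
  show "integrable M (\<lambda>x. (f x)\<^sup>2 + (g x)\<^sup>2)" using assms by simp
  show "AE x in M. norm (f x * g x) \<le> norm ((f x)\<^sup>2 + (g x)\<^sup>2)"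
  proof (rule AE_I2)
    fix x
    have "0 \<le> (\<bar>f x\<bar> - \<bar>g x\<bar>)\<^sup>2" by simp
    then have "2 * (\<bar>f x\<bar> * \<bar>g x\<bar>) \<le> (f x)\<^sup>2 + (g x)\<^sup>2"
      by (simp add: power2_diff power2_abs algebra_simps)
    moreover have "0 \<le> \<bar>f x\<bar> * \<bar>g x\<bar>" by simp
    ultimately show "norm (f x * g x) \<le> norm ((f x)\<^sup>2 + (g x)\<^sup>2)"
      unfolding real_norm_def abs_mult by (smt (verit) zero_le_power2)
  qed
qed simp

locale GF = prob_space M for M :: "'a measure" +
  fixes X :: "nat \<Rightarrow> 'a \<Rightarrow> real" and n :: nat and \<mu> \<sigma> :: "nat \<Rightarrow> real"
  assumes JG: "jointly_gaussian M {1..n} X"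
    and mu: "\<forall>i\<in>{1..n}. integral\<^sup>L M (X i) = \<mu> i"
    and sig: "\<forall>i\<in>{1..n}. \<sigma> i > 0 \<and> covariance M (X i) (X i) = (\<sigma> i)\<^sup>2"
    and cor: "\<forall>i\<in>{1..n}. \<forall>j\<in>{1..n}. i \<noteq> j \<longrightarrow> correlation M (X i) (X j) < 1"
begin

lemma Xm[measurable]: "i \<in> {1..n} \<Longrightarrow> X i \<in> borel_measurable M"
  using JG by (simp add: jointly_gaussian_def)

lemma gl: "gaussian_rv M (\<lambda>\<omega>. \<Sum>k\<in>{1..n}. c k * X k \<omega>)"
  using JG by (simp add: jointly_gaussian_def)

definition lin :: "('a \<Rightarrow> real) \<Rightarrow> bool" where
  "lin L \<longleftrightarrow> (\<exists>c d. \<forall>\<omega>. L \<omega> = (\<Sum>k\<in>{1..n}. c k * X k \<omega>) + d)"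

lemma lin_X: "k \<in> {1..n} \<Longrightarrow> lin (X k)"
  unfolding lin_def
proof (intro exI allI)
  fix \<omega> assume k: "k \<in> {1..n}"
  have "(\<Sum>j\<in>{1..n}. (if j = k then 1 else 0) * X j \<omega>) = (\<Sum>j\<in>{1..n}. if j = k then X j \<omega> else 0)"
    by (intro sum.cong) auto
  also have "\<dots> = X k \<omega>" using k by simp
  finally show "X k \<omega> = (\<Sum>j\<in>{1..n}. (if j = k then 1 else 0) * X j \<omega>) + 0" by simp
qed

lemma lin_const: "lin (\<lambda>_. d)"
  unfolding lin_def by (intro exI[of _ "\<lambda>_. 0"] exI[of _ d]) simp

lemma lin_add: "lin L1 \<Longrightarrow> lin L2 \<Longrightarrow> lin (\<lambda>\<omega>. L1 \<omega> + L2 \<omega>)"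
  unfolding lin_def
proof (elim exE)
  fix c1 d1 c2 d2
  assume 1: "\<forall>\<omega>. L1 \<omega> = (\<Sum>k\<in>{1..n}. c1 k * X k \<omega>) + d1" and 2: "\<forall>\<omega>. L2 \<omega> = (\<Sum>k\<in>{1..n}. c2 k * X k \<omega>) + d2"
  show "\<exists>c d. \<forall>\<omega>. L1 \<omega> + L2 \<omega> = (\<Sum>k\<in>{1..n}. c k * X k \<omega>) + d"
    by (intro exI[of _ "\<lambda>k. c1 k + c2 k"] exI[of _ "d1 + d2"]) (simp add: 1 2 distrib_right sum.distrib)
qed

lemma lin_scale: "lin L \<Longrightarrow> lin (\<lambda>\<omega>. a * L \<omega>)"
  unfolding lin_def
proof (elim exE)
  fix c d
  assume 1: "\<forall>\<omega>. L \<omega> = (\<Sum>k\<in>{1..n}. c k * X k \<omega>) + d"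
  show "\<exists>c d. \<forall>\<omega>. a * L \<omega> = (\<Sum>k\<in>{1..n}. c k * X k \<omega>) + d"
    by (intro exI[of _ "\<lambda>k. a * c k"] exI[of _ "a * d"]) (simp add: 1 distrib_left sum_distrib_left mult.assoc)
qed

lemma lin_diff: "lin L1 \<Longrightarrow> lin L2 \<Longrightarrow> lin (\<lambda>\<omega>. L1 \<omega> - L2 \<omega>)"
  using lin_add[of L1 "\<lambda>\<omega>. (-1) * L2 \<omega>"] lin_scale[of L2 "-1"] by simp

lemma lin_sum: "finite S \<Longrightarrow> (\<And>j. j \<in> S \<Longrightarrow> lin (f j)) \<Longrightarrow> lin (\<lambda>\<omega>. \<Sum>j\<in>S. f j \<omega>)"
proof (induction S rule: finite_induct)
  case empty then show ?case using lin_const[of 0] by simp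
next
  case (insert x F)
  then show ?case using lin_add[of "f x" "\<lambda>\<omega>. \<Sum>j\<in>F. f j \<omega>"] by simp
qed

lemma lin_gauss_shift:
  assumes "lin L"
  obtains G d where "gaussian_rv M G" "\<And>\<omega>. L \<omega> = G \<omega> + d"
  using assms gl unfolding lin_def by blast

lemma lin_props:
  assumes "lin L"
  shows "L \<in> borel_measurable M" "integrable M L" "integrable M (\<lambda>\<omega>. (L \<omega>)\<^sup>2)"
proof -
  obtain G d where G: "gaussian_rv M G" and L: "\<And>\<omega>. L \<omega> = G \<omega> + d" using lin_gauss_shift[OF assms] by blast
  have Gm[measurable]: "G \<in> borel_measurable M" using G by (simp add: gaussian_rv_def)
  have LG: "L = (\<lambda>\<omega>. G \<omega> + d)" using L by auto
  have i: "integrable M G" "integrable M (\<lambda>\<omega>. (G \<omega>)\<^sup>2)" using gauss_L2[OF prob_space_axioms G] by auto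
  show "L \<in> borel_measurable M" unfolding LG by measurable
  show "integrable M L" unfolding LG using i by simp
  have "(\<lambda>\<omega>. (G \<omega> + d)\<^sup>2) = (\<lambda>\<omega>. (G \<omega>)\<^sup>2 + 2 * d * G \<omega> + d\<^sup>2)" by (auto simp: power2_eq_square algebra_simps)
  then show "integrable M (\<lambda>\<omega>. (L \<omega>)\<^sup>2)" unfolding LG using i by simp
qed

lemma lin_prod_int: "lin L1 \<Longrightarrow> lin L2 \<Longrightarrow> integrable M (\<lambda>\<omega>. L1 \<omega> * L2 \<omega>)"
  using lin_props[of L1] lin_props[of L2] by (intro integrable_prod_L2) auto

lemma lin_char:
  assumes "lin L"
  shows "(CLINT \<omega>|M. iexp (L \<omega>)) = iexp (expectation L) * complex_of_real (exp (- expectation (\<lambda>\<omega>. (L \<omega> - expectation L)\<^sup>2) / 2))"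
proof -
  obtain G d where G: "gaussian_rv M G" and L: "\<And>\<omega>. L \<omega> = G \<omega> + d" using lin_gauss_shift[OF assms] by blast
  have Gm[measurable]: "G \<in> borel_measurable M" using G by (simp add: gaussian_rv_def)
  have LG: "L = (\<lambda>\<omega>. G \<omega> + d)" using L by auto
  have i: "integrable M G" using gauss_L2[OF prob_space_axioms G] by auto
  have E: "expectation L = expectation G + d" unfolding LG using i by (simp add: prob_space)
  have "(CLINT \<omega>|M. iexp (L \<omega>)) = (CLINT \<omega>|M. iexp d * iexp (G \<omega>))"
    unfolding LG by (intro Bochner_Integration.integral_cong refl) (simp only: iexp_add mult.commute)
  also have "\<dots> = iexp d * (CLINT \<omega>|M. iexp (G \<omega>))" by simp
  also have "\<dots> = iexp d * (iexp (expectation G) * complex_of_real (exp (- expectation (\<lambda>\<omega>. (G \<omega> - expectation G)\<^sup>2) / 2)))"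
    using gauss_char[OF prob_space_axioms G] by simp
  finally have *: "(CLINT \<omega>|M. iexp (L \<omega>)) = iexp d * (iexp (expectation G) * complex_of_real (exp (- expectation (\<lambda>\<omega>. (G \<omega> - expectation G)\<^sup>2) / 2)))" .
  have V: "expectation (\<lambda>\<omega>. (L \<omega> - expectation L)\<^sup>2) = expectation (\<lambda>\<omega>. (G \<omega> - expectation G)\<^sup>2)"
    by (simp add: E L)
  have ie: "iexp (expectation G + d) = iexp d * iexp (expectation G)" by (simp only: iexp_add mult.commute)
  show ?thesis unfolding V unfolding E ie * by (simp only: mult.assoc)
qed


lemma gauss_X: "i \<in> {1..n} \<Longrightarrow> gaussian_rv M (X i)"
proof -
  assume i: "i \<in> {1..n}"
  have "(\<lambda>\<omega>. \<Sum>k\<in>{1..n}. (if k = i then 1 else 0) * X k \<omega>) = X i"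
  proof
    fix \<omega>
    have "(\<Sum>k\<in>{1..n}. (if k = i then 1 else 0) * X k \<omega>) = (\<Sum>k\<in>{1..n}. if k = i then X k \<omega> else 0)"
      by (intro sum.cong) auto
    then show "(\<Sum>k\<in>{1..n}. (if k = i then 1 else 0) * X k \<omega>) = X i \<omega>" using i by simp
  qed
  then show ?thesis using gl[of "\<lambda>k. if k = i then 1 else 0"] by simp
qed

lemma cov_self: "covariance M Y Y = expectation (\<lambda>\<omega>. (Y \<omega> - expectation Y)\<^sup>2)"
  unfolding covariance_def by (simp add: power2_eq_square)

lemma Xnorm: "i \<in> {1..n} \<Longrightarrow> distributed M lborel (X i) (\<lambda>x. ennreal (normal_density (\<mu> i) (\<sigma> i) x))"
proof -
  assume i: "i \<in> {1..n}"
  have G: "gaussian_rv M (X i)" using gauss_X[OF i] .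
  have si: "\<sigma> i > 0" "covariance M (X i) (X i) = (\<sigma> i)\<^sup>2" "expectation (X i) = \<mu> i"
    using sig mu i by auto
  from G obtain m s where ms: "(s > 0 \<and> distributed M lborel (X i) (\<lambda>x. ennreal (normal_density m s x))) \<or> (AE \<omega> in M. X i \<omega> = m)"
    by (auto simp: gaussian_rv_def)
  then show ?thesis
  proof
    assume a: "s > 0 \<and> distributed M lborel (X i) (\<lambda>x. ennreal (normal_density m s x))"
    then have s: "s > 0" and D: "distributed M lborel (X i) (\<lambda>x. ennreal (normal_density m s x))" by auto
    have "expectation (X i) = m" using normal_distributed_expectation[OF s D] .
    then have m: "m = \<mu> i" using si by simp
    have "variance (X i) = s\<^sup>2" using normal_distributed_variance[OF s D] .
    then have "s\<^sup>2 = (\<sigma> i)\<^sup>2" using si cov_self[of "X i"] by simp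
    then have "s = \<sigma> i" using s si(1) by (simp add: power2_eq_iff)
    then show ?thesis using D m by simp
  next
    assume ae: "AE \<omega> in M. X i \<omega> = m"
    have E: "expectation (X i) = m"
      using integral_cong_AE[of "X i" M "\<lambda>_. m"] ae i by (simp add: prob_space)
    have "expectation (\<lambda>\<omega>. (X i \<omega> - expectation (X i))\<^sup>2) = 0"
      using integral_cong_AE[of "\<lambda>\<omega>. (X i \<omega> - m)\<^sup>2" M "\<lambda>_. 0"] ae E i by simp
    then have "(\<sigma> i)\<^sup>2 = 0" using si cov_self[of "X i"] by simp
    then show ?thesis using si by simp
  qed
qed

lemma lin_int_sq_diff:
  assumes "lin A" "lin B"
  shows "expectation (\<lambda>\<omega>. (A \<omega> - B \<omega>)\<^sup>2) = expectation (\<lambda>\<omega>. (A \<omega>)\<^sup>2) + expectation (\<lambda>\<omega>. (B \<omega>)\<^sup>2) - 2 * expectation (\<lambda>\<omega>. A \<omega> * B \<omega>)"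
proof -
  have e: "(\<lambda>\<omega>. (A \<omega> - B \<omega>)\<^sup>2) = (\<lambda>\<omega>. (A \<omega>)\<^sup>2 + (B \<omega>)\<^sup>2 - 2 * (A \<omega> * B \<omega>))"
    by (auto simp: power2_eq_square algebra_simps)
  show ?thesis unfolding e using lin_props(3)[OF assms(1)] lin_props(3)[OF assms(2)] lin_prod_int[OF assms]
    by simp
qed

lemma lin_int_sq_add:
  assumes "lin A" "lin B"
  shows "expectation (\<lambda>\<omega>. (A \<omega> + B \<omega>)\<^sup>2) = expectation (\<lambda>\<omega>. (A \<omega>)\<^sup>2) + expectation (\<lambda>\<omega>. (B \<omega>)\<^sup>2) + 2 * expectation (\<lambda>\<omega>. A \<omega> * B \<omega>)"
proof -
  have e: "(\<lambda>\<omega>. (A \<omega> + B \<omega>)\<^sup>2) = (\<lambda>\<omega>. (A \<omega>)\<^sup>2 + (B \<omega>)\<^sup>2 + 2 * (A \<omega> * B \<omega>))"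
    by (auto simp: power2_eq_square algebra_simps)
  show ?thesis unfolding e using lin_props(3)[OF assms(1)] lin_props(3)[OF assms(2)] lin_prod_int[OF assms]
    by simp
qed

lemma lin_cen: "i \<in> {1..n} \<Longrightarrow> lin (\<lambda>\<omega>. X i \<omega> - \<mu> i)"
  using lin_diff[OF lin_X lin_const] by simp

lemma cov_cen: "i \<in> {1..n} \<Longrightarrow> j \<in> {1..n} \<Longrightarrow> covariance M (X i) (X j) = expectation (\<lambda>\<omega>. (X i \<omega> - \<mu> i) * (X j \<omega> - \<mu> j))"
  unfolding covariance_def using mu by simp

lemma ties: "i \<in> {1..n} \<Longrightarrow> j \<in> {1..n} \<Longrightarrow> i \<noteq> j \<Longrightarrow> AE \<omega> in M. X i \<omega> \<noteq> X j \<omega>"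
proof -
  assume i: "i \<in> {1..n}" and j: "j \<in> {1..n}" and ij: "i \<noteq> j"
  define D where "D \<omega> = X i \<omega> - X j \<omega>" for \<omega>
  have Dm[measurable]: "D \<in> borel_measurable M" unfolding D_def using i j by measurable
  have "(\<lambda>\<omega>. \<Sum>k\<in>{1..n}. (if k = i then 1 else if k = j then -1 else 0) * X k \<omega>) = D"
  proof
    fix \<omega>
    have "(\<Sum>k\<in>{1..n}. (if k = i then 1 else if k = j then -1 else 0) * X k \<omega>)
       = (\<Sum>k\<in>{1..n}. (if k = i then X k \<omega> else 0) + (if k = j then - X k \<omega> else 0))"
      using ij by (intro sum.cong) auto
    also have "\<dots> = X i \<omega> - X j \<omega>" using i j by (simp add: sum.distrib)
    finally show "(\<Sum>k\<in>{1..n}. (if k = i then 1 else if k = j then -1 else 0) * X k \<omega>) = D \<omega>"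
      by (simp add: D_def)
  qed
  then have G: "gaussian_rv M D" using gl[of "\<lambda>k. if k = i then 1 else if k = j then -1 else 0"] by simp
  have si: "\<sigma> i > 0" "covariance M (X i) (X i) = (\<sigma> i)\<^sup>2" and sj: "\<sigma> j > 0" "covariance M (X j) (X j) = (\<sigma> j)\<^sup>2"
    using sig i j by auto
  have cr: "correlation M (X i) (X j) < 1" using cor i j ij by auto
  have "sqrt (covariance M (X i) (X i) * covariance M (X j) (X j)) = \<sigma> i * \<sigma> j"
    using si sj by (simp add: real_sqrt_mult)
  then have cij: "covariance M (X i) (X j) < \<sigma> i * \<sigma> j"
    using cr si sj unfolding correlation_def by (simp add: divide_less_eq)
  have ED: "expectation D = \<mu> i - \<mu> j" unfolding D_def using lin_props(2)[OF lin_X[OF i]] lin_props(2)[OF lin_X[OF j]] mu i j by simp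
  have "expectation (\<lambda>\<omega>. (D \<omega> - expectation D)\<^sup>2) = expectation (\<lambda>\<omega>. ((X i \<omega> - \<mu> i) - (X j \<omega> - \<mu> j))\<^sup>2)"
    unfolding ED D_def by (simp add: algebra_simps)
  also have "\<dots> = (\<sigma> i)\<^sup>2 + (\<sigma> j)\<^sup>2 - 2 * covariance M (X i) (X j)"
    using lin_int_sq_diff[OF lin_cen[OF i] lin_cen[OF j]] cov_cen[OF i j] cov_cen[OF i i] cov_cen[OF j j] si sj
    by (simp add: power2_eq_square)
  finally have VD: "expectation (\<lambda>\<omega>. (D \<omega> - expectation D)\<^sup>2) = (\<sigma> i)\<^sup>2 + (\<sigma> j)\<^sup>2 - 2 * covariance M (X i) (X j)" .
  have "0 \<le> (\<sigma> i - \<sigma> j)\<^sup>2" by simp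
  then have VDpos: "expectation (\<lambda>\<omega>. (D \<omega> - expectation D)\<^sup>2) > 0"
    unfolding VD using cij by (simp add: power2_diff)
  from G obtain m s where ms: "(s > 0 \<and> distributed M lborel D (\<lambda>x. ennreal (normal_density m s x))) \<or> (AE \<omega> in M. D \<omega> = m)"
    by (auto simp: gaussian_rv_def)
  then have "AE \<omega> in M. D \<omega> \<noteq> 0"
  proof
    assume a: "s > 0 \<and> distributed M lborel D (\<lambda>x. ennreal (normal_density m s x))"
    then have DD: "distributed M lborel D (\<lambda>x. ennreal (normal_density m s x))" by auto
    have "emeasure M (D -` {0} \<inter> space M) = (\<integral>\<^sup>+x. ennreal (normal_density m s x) * indicator {0} x \<partial>lborel)"
      using distributed_emeasure[OF DD] by simp
    also have "\<dots> = 0"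
    proof (rule nn_integral_0_iff_AE[THEN iffD2])
      show "(\<lambda>x. ennreal (normal_density m s x) * indicator {0} x) \<in> borel_measurable lborel" by measurable
      have "AE x in lborel. x \<noteq> 0" by (rule AE_lborel_singleton)
      then show "AE x in lborel. ennreal (normal_density m s x) * indicator {0} x = 0"
        by eventually_elim simp
    qed
    finally have "emeasure M (D -` {0} \<inter> space M) = 0" .
    then show ?thesis
      by (intro AE_I[of _ _ "D -` {0} \<inter> space M"]) auto
  next
    assume ae: "AE \<omega> in M. D \<omega> = m"
    have E: "expectation D = m"
      using integral_cong_AE[of D M "\<lambda>_. m"] ae by (simp add: prob_space)
    have "expectation (\<lambda>\<omega>. (D \<omega> - expectation D)\<^sup>2) = 0"
      using integral_cong_AE[of "\<lambda>\<omega>. (D \<omega> - m)\<^sup>2" M "\<lambda>_. 0"] ae E by simp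
    then show ?thesis using VDpos by simp
  qed
  then show ?thesis by eventually_elim (simp add: D_def)
qed


definition bc :: "nat \<Rightarrow> nat \<Rightarrow> real" where
  "bc i k = covariance M (X k) (X i) / covariance M (X i) (X i)"

lemma W_eq: "regr_resid M X k i \<omega> = (X k \<omega> - \<mu> k) - bc i k * (X i \<omega> - \<mu> i)"
  if "i \<in> {1..n}" "k \<in> {1..n}"
  using that mu unfolding regr_resid_def bc_def by simp

lemma lin_W: "i \<in> {1..n} \<Longrightarrow> k \<in> {1..n} \<Longrightarrow> lin (regr_resid M X k i)"
proof -
  assume i: "i \<in> {1..n}" and k: "k \<in> {1..n}"
  have "regr_resid M X k i = (\<lambda>\<omega>. (X k \<omega> - \<mu> k) - bc i k * (X i \<omega> - \<mu> i))"
    using W_eq[OF i k] by auto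
  then show ?thesis using lin_diff[OF lin_cen[OF k] lin_scale[OF lin_cen[OF i]]] by simp
qed

lemma cov_sym: "covariance M Y Z = covariance M Z Y"
  unfolding covariance_def by (simp add: mult.commute)

lemma EW: "i \<in> {1..n} \<Longrightarrow> k \<in> {1..n} \<Longrightarrow> expectation (regr_resid M X k i) = 0"
proof -
  assume i: "i \<in> {1..n}" and k: "k \<in> {1..n}"
  have "regr_resid M X k i = (\<lambda>\<omega>. (X k \<omega> - \<mu> k) - bc i k * (X i \<omega> - \<mu> i))"
    using W_eq[OF i k] by auto
  then show ?thesis using lin_props(2)[OF lin_X[OF i]] lin_props(2)[OF lin_X[OF k]] mu i k
    by (simp add: prob_space)
qed

lemma cenW: "i \<in> {1..n} \<Longrightarrow> k \<in> {1..n} \<Longrightarrow> expectation (\<lambda>\<omega>. (X i \<omega> - \<mu> i) * regr_resid M X k i \<omega>) = 0"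
proof -
  assume i: "i \<in> {1..n}" and k: "k \<in> {1..n}"
  have e: "(\<lambda>\<omega>. (X i \<omega> - \<mu> i) * regr_resid M X k i \<omega>) = (\<lambda>\<omega>. (X i \<omega> - \<mu> i) * (X k \<omega> - \<mu> k) - bc i k * ((X i \<omega> - \<mu> i) * (X i \<omega> - \<mu> i)))"
    by (rule ext) (simp add: W_eq[OF i k] algebra_simps)
  have "expectation (\<lambda>\<omega>. (X i \<omega> - \<mu> i) * regr_resid M X k i \<omega>) = covariance M (X i) (X k) - bc i k * covariance M (X i) (X i)"
    unfolding e cov_cen[OF i k] cov_cen[OF i i]
    using lin_prod_int[OF lin_cen[OF i] lin_cen[OF k]] lin_prod_int[OF lin_cen[OF i] lin_cen[OF i]] by simp
  also have "\<dots> = 0"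
  proof -
    have "\<sigma> i > 0" "covariance M (X i) (X i) = (\<sigma> i)\<^sup>2" using sig i by auto
    then show ?thesis unfolding bc_def using cov_sym[of "X i" "X k"] by simp
  qed
  finally show ?thesis .
qed

definition TT :: "nat \<Rightarrow> (nat \<Rightarrow> real) \<Rightarrow> 'a \<Rightarrow> real" where
  "TT i t \<omega> = (\<Sum>k\<in>{1..n} - {i}. t k * regr_resid M X k i \<omega>)"

lemma lin_TT: "i \<in> {1..n} \<Longrightarrow> lin (TT i t)"
  unfolding TT_def by (intro lin_sum lin_scale lin_W) auto

lemma ETT: "i \<in> {1..n} \<Longrightarrow> expectation (TT i t) = 0"
proof -
  assume i: "i \<in> {1..n}"
  have "expectation (TT i t) = (\<Sum>k\<in>{1..n} - {i}. expectation (\<lambda>\<omega>. t k * regr_resid M X k i \<omega>))"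
    unfolding TT_def by (rule Bochner_Integration.integral_sum) (auto intro!: lin_props(2) lin_scale lin_W i)
  also have "\<dots> = 0" using EW i by simp
  finally show ?thesis .
qed

lemma cenTT: "i \<in> {1..n} \<Longrightarrow> expectation (\<lambda>\<omega>. (s * (X i \<omega> - \<mu> i)) * TT i t \<omega>) = 0"
proof -
  assume i: "i \<in> {1..n}"
  have e: "(\<lambda>\<omega>. (s * (X i \<omega> - \<mu> i)) * TT i t \<omega>) = (\<lambda>\<omega>. \<Sum>k\<in>{1..n} - {i}. (s * t k) * ((X i \<omega> - \<mu> i) * regr_resid M X k i \<omega>))"
    unfolding TT_def by (auto simp: sum_distrib_left algebra_simps)
  have "expectation (\<lambda>\<omega>. (s * (X i \<omega> - \<mu> i)) * TT i t \<omega>) = (\<Sum>k\<in>{1..n} - {i}. expectation (\<lambda>\<omega>. (s * t k) * ((X i \<omega> - \<mu> i) * regr_resid M X k i \<omega>)))"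
    unfolding e by (rule Bochner_Integration.integral_sum) (auto intro!: lin_prod_int lin_cen lin_W i)
  also have "\<dots> = 0" using cenW i by simp
  finally show ?thesis .
qed

lemma char_split:
  assumes i: "i \<in> {1..n}"
  shows "(CLINT \<omega>|M. iexp (s * X i \<omega> + TT i t \<omega>)) = (CLINT \<omega>|M. iexp (s * X i \<omega>)) * (CLINT \<omega>|M. iexp (TT i t \<omega>))"
proof -
  have lA: "lin (\<lambda>\<omega>. s * X i \<omega>)" by (rule lin_scale[OF lin_X[OF i]])
  have lAc: "lin (\<lambda>\<omega>. s * (X i \<omega> - \<mu> i))" by (rule lin_scale[OF lin_cen[OF i]])
  have lT: "lin (TT i t)" by (rule lin_TT[OF i])
  have EX: "expectation (\<lambda>\<omega>. s * X i \<omega>) = s * \<mu> i" using mu i by simp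
  have VX: "expectation (\<lambda>\<omega>. (s * X i \<omega> - expectation (\<lambda>\<omega>. s * X i \<omega>))\<^sup>2) = s\<^sup>2 * (\<sigma> i)\<^sup>2"
  proof -
    have "(\<lambda>\<omega>. (s * X i \<omega> - expectation (\<lambda>\<omega>. s * X i \<omega>))\<^sup>2) = (\<lambda>\<omega>. s\<^sup>2 * ((X i \<omega> - \<mu> i) * (X i \<omega> - \<mu> i)))"
      unfolding EX by (auto simp: power2_eq_square algebra_simps)
    then show ?thesis using cov_cen[OF i i] sig i by simp
  qed
  have ET: "expectation (TT i t) = 0" by (rule ETT[OF i])
  have EXT: "expectation (\<lambda>\<omega>. s * X i \<omega> + TT i t \<omega>) = s * \<mu> i"
    using lin_props(2)[OF lA] lin_props(2)[OF lT] EX ET by simp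
  have VXT: "expectation (\<lambda>\<omega>. (s * X i \<omega> + TT i t \<omega> - expectation (\<lambda>\<omega>. s * X i \<omega> + TT i t \<omega>))\<^sup>2)
     = s\<^sup>2 * (\<sigma> i)\<^sup>2 + expectation (\<lambda>\<omega>. (TT i t \<omega>)\<^sup>2)"
  proof -
    have "(\<lambda>\<omega>. (s * X i \<omega> + TT i t \<omega> - expectation (\<lambda>\<omega>. s * X i \<omega> + TT i t \<omega>))\<^sup>2) = (\<lambda>\<omega>. (s * (X i \<omega> - \<mu> i) + TT i t \<omega>)\<^sup>2)"
      unfolding EXT by (auto simp: algebra_simps)
    moreover have "expectation (\<lambda>\<omega>. (s * (X i \<omega> - \<mu> i))\<^sup>2) = s\<^sup>2 * (\<sigma> i)\<^sup>2"
    proof -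
      have "(\<lambda>\<omega>. (s * (X i \<omega> - \<mu> i))\<^sup>2) = (\<lambda>\<omega>. s\<^sup>2 * ((X i \<omega> - \<mu> i) * (X i \<omega> - \<mu> i)))"
        by (auto simp: power2_eq_square algebra_simps)
      then show ?thesis using cov_cen[OF i i] sig i by simp
    qed
    ultimately show ?thesis using lin_int_sq_add[OF lAc lT] cenTT[OF i, of s t] by simp
  qed
  have VT: "expectation (\<lambda>\<omega>. (TT i t \<omega> - expectation (TT i t))\<^sup>2) = expectation (\<lambda>\<omega>. (TT i t \<omega>)\<^sup>2)"
    unfolding ET by simp
  have c1: "(CLINT \<omega>|M. iexp (s * X i \<omega> + TT i t \<omega>)) = iexp (s * \<mu> i) * complex_of_real (exp (- (s\<^sup>2 * (\<sigma> i)\<^sup>2 + expectation (\<lambda>\<omega>. (TT i t \<omega>)\<^sup>2)) / 2))"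
    using lin_char[OF lin_add[OF lA lT]] unfolding VXT unfolding EXT by simp
  have c2: "(CLINT \<omega>|M. iexp (s * X i \<omega>)) = iexp (s * \<mu> i) * complex_of_real (exp (- (s\<^sup>2 * (\<sigma> i)\<^sup>2) / 2))"
    using lin_char[OF lA] unfolding VX unfolding EX by simp
  have c3: "(CLINT \<omega>|M. iexp (TT i t \<omega>)) = complex_of_real (exp (- expectation (\<lambda>\<omega>. (TT i t \<omega>)\<^sup>2) / 2))"
    using lin_char[OF lT] unfolding VT unfolding ET by simp
  have "exp (- (s\<^sup>2 * (\<sigma> i)\<^sup>2 + expectation (\<lambda>\<omega>. (TT i t \<omega>)\<^sup>2)) / 2) = exp (- (s\<^sup>2 * (\<sigma> i)\<^sup>2) / 2) * exp (- expectation (\<lambda>\<omega>. (TT i t \<omega>)\<^sup>2) / 2)"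
    by (simp add: exp_add[symmetric] field_simps)
  then show ?thesis unfolding c1 c2 c3 by simp
qed

end



lemma prod_ind: "finite I \<Longrightarrow> (\<Prod>k\<in>I. (indicator (A k) (f k) :: real)) = (if \<forall>k\<in>I. f k \<in> A k then 1 else 0)"
  by (induction I rule: finite_induct) (auto simp: indicator_def)

lemma integral_prod_split:
  fixes f :: "'a \<Rightarrow> complex" and g :: "'b \<Rightarrow> complex"
  assumes PM: "prob_space M" and PN: "prob_space N"
    and [measurable]: "f \<in> borel_measurable M" "g \<in> borel_measurable N"
    and fb: "\<forall>x\<in>space M. norm (f x) \<le> 1" and gb: "\<forall>y\<in>space N. norm (g y) \<le> 1"
  shows "(CLINT z|(M \<Otimes>\<^sub>M N). f (fst z) * g (snd z)) = integral\<^sup>L M f * integral\<^sup>L N g"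
proof -
  interpret pair_prob_space M N
    using PM PN by (simp add: pair_prob_space_def pair_sigma_finite_def prob_space_imp_sigma_finite)
  have int: "integrable (M \<Otimes>\<^sub>M N) (\<lambda>z. f (fst z) * g (snd z))"
  proof (rule bnd_int[where B=1])
    show "prob_space (M \<Otimes>\<^sub>M N)" by (rule P.prob_space_axioms)
    show "(\<lambda>z. f (fst z) * g (snd z)) \<in> borel_measurable (M \<Otimes>\<^sub>M N)" by measurable
    show "\<forall>z\<in>space (M \<Otimes>\<^sub>M N). norm (f (fst z) * g (snd z)) \<le> 1"
      using fb gb by (auto simp: space_pair_measure norm_mult intro: mult_le_one)
  qed
  have "(CLINT z|(M \<Otimes>\<^sub>M N). f (fst z) * g (snd z)) = (CLINT x|M. (CLINT y|N. f x * g y))"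
    using integral_fst'[OF int] by simp
  also have "\<dots> = (CLINT x|M. f x * integral\<^sup>L N g)" by simp
  also have "\<dots> = integral\<^sup>L M f * integral\<^sup>L N g" by simp
  finally show ?thesis .
qed

context GF begin

definition YY :: "nat \<Rightarrow> nat \<Rightarrow> 'a \<Rightarrow> real" where
  "YY i k \<omega> = (if k = i then X i \<omega> else regr_resid M X k i \<omega>)"

lemma YY_m[measurable]: "i \<in> {1..n} \<Longrightarrow> k \<in> {1..n} \<Longrightarrow> YY i k \<in> borel_measurable M"
  unfolding YY_def using lin_props(1)[OF lin_W, of i k] by auto

lemma sum_YY: "i \<in> {1..n} \<Longrightarrow> (\<Sum>k\<in>{1..n}. t k * YY i k \<omega>) = t i * X i \<omega> + TT i t \<omega>"
proof -
  assume i: "i \<in> {1..n}"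
  have "(\<Sum>k\<in>{1..n}. t k * YY i k \<omega>) = t i * YY i i \<omega> + (\<Sum>k\<in>{1..n} - {i}. t k * YY i k \<omega>)"
    using i by (simp add: sum.remove)
  also have "(\<Sum>k\<in>{1..n} - {i}. t k * YY i k \<omega>) = TT i t \<omega>"
    unfolding TT_def YY_def by (intro sum.cong) auto
  finally show ?thesis by (simp add: YY_def)
qed

lemma sum_YY': "i \<in> {1..n} \<Longrightarrow> (\<Sum>k\<in>{1..n}. t k * (if k = i then X i (fst z) else regr_resid M X k i (snd z))) = t i * X i (fst z) + TT i t (snd z)"
proof -
  assume i: "i \<in> {1..n}"
  have "(\<Sum>k\<in>{1..n}. t k * (if k = i then X i (fst z) else regr_resid M X k i (snd z))) = t i * X i (fst z) + (\<Sum>k\<in>{1..n} - {i}. t k * (if k = i then X i (fst z) else regr_resid M X k i (snd z)))"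
    using i by (simp add: sum.remove)
  also have "(\<Sum>k\<in>{1..n} - {i}. t k * (if k = i then X i (fst z) else regr_resid M X k i (snd z))) = TT i t (snd z)"
    unfolding TT_def by (intro sum.cong) auto
  finally show ?thesis .
qed

lemma box_eq:
  assumes i: "i \<in> {1..n}" and B: "\<forall>k\<in>{1..n}. B k \<in> sets borel"
  shows "(LINT \<omega>|M. (1::real) * (\<Prod>k\<in>{1..n}. indicator (B k) (YY i k \<omega>)))
    = (LINT z|(M \<Otimes>\<^sub>M M). (1::real) * (\<Prod>k\<in>{1..n}. indicator (B k) (if k = i then X i (fst z) else regr_resid M X k i (snd z))))"
proof (rule MU[where C=1 and H="\<lambda>_. 1" and H'="\<lambda>_. 1" and Y="YY i" and Y'="\<lambda>k z. if k = i then X i (fst z) else regr_resid M X k i (snd z)" and I="{1..n}" and B=B])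
  show "prob_space M" by (rule prob_space_axioms)
  show "prob_space (M \<Otimes>\<^sub>M M)" by (rule prob_space_pair[OF prob_space_axioms prob_space_axioms])
  show "\<forall>j\<in>{1..n}. YY i j \<in> borel_measurable M" using i by auto
  show "\<forall>j\<in>{1..n}. (\<lambda>z. if j = i then X i (fst z) else regr_resid M X j i (snd z)) \<in> borel_measurable (M \<Otimes>\<^sub>M M)"
    using i lin_props(1)[OF lin_W, of i] by auto
  fix t
  have lm: "lin (\<lambda>\<omega>. t i * X i \<omega>)" using lin_scale[OF lin_X[OF i]] .
  have lT: "lin (TT i t)" using lin_TT[OF i] .
  have [measurable]: "(\<lambda>\<omega>. t i * X i \<omega>) \<in> borel_measurable M" "TT i t \<in> borel_measurable M"
    using lin_props(1)[OF lm] lin_props(1)[OF lT] by auto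
  have "(CLINT \<omega>|M. complex_of_real 1 * iexp (\<Sum>j\<in>{1..n}. t j * YY i j \<omega>)) = (CLINT \<omega>|M. iexp (t i * X i \<omega> + TT i t \<omega>))"
    using sum_YY[OF i] by simp
  also have "\<dots> = (CLINT \<omega>|M. iexp (t i * X i \<omega>)) * (CLINT \<omega>|M. iexp (TT i t \<omega>))"
    by (rule char_split[OF i])
  also have "\<dots> = (CLINT z|(M \<Otimes>\<^sub>M M). iexp (t i * X i (fst z)) * iexp (TT i t (snd z)))"
  proof (rule integral_prod_split[symmetric, OF prob_space_axioms prob_space_axioms])
    have [measurable]: "X i \<in> borel_measurable M" using i by simp
    show "(\<lambda>\<omega>. iexp (t i * X i \<omega>)) \<in> borel_measurable M" by measurable
    show "(\<lambda>\<omega>. iexp (TT i t \<omega>)) \<in> borel_measurable M" by measurable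
  qed auto
  also have "\<dots> = (CLINT z|(M \<Otimes>\<^sub>M M). complex_of_real 1 * iexp (\<Sum>j\<in>{1..n}. t j * (if j = i then X i (fst z) else regr_resid M X j i (snd z))))"
    unfolding sum_YY'[OF i] by (simp only: iexp_add of_real_1 mult_1_left)
  finally show "(CLINT \<omega>|M. complex_of_real 1 * iexp (\<Sum>j\<in>{1..n}. t j * YY i j \<omega>)) = (CLINT z|(M \<Otimes>\<^sub>M M). complex_of_real 1 * iexp (\<Sum>j\<in>{1..n}. t j * (if j = i then X i (fst z) else regr_resid M X j i (snd z))))" .
qed (use B in auto)


definition VV :: "nat \<Rightarrow> 'a \<Rightarrow> nat \<Rightarrow> real" where
  "VV i \<omega> = (\<lambda>k\<in>{1..n}. YY i k \<omega>)"
definition VV' :: "nat \<Rightarrow> 'a \<times> 'a \<Rightarrow> nat \<Rightarrow> real" where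
  "VV' i z = (\<lambda>k\<in>{1..n}. if k = i then X i (fst z) else regr_resid M X k i (snd z))"

lemma VV_m[measurable]: "i \<in> {1..n} \<Longrightarrow> VV i \<in> measurable M (PiM {1..n} (\<lambda>_. borel))"
  unfolding VV_def by (rule measurable_restrict) simp

lemma VV'_m[measurable]: "i \<in> {1..n} \<Longrightarrow> VV' i \<in> measurable (M \<Otimes>\<^sub>M M) (PiM {1..n} (\<lambda>_. borel))"
  unfolding VV'_def
proof (rule measurable_restrict)
  fix k assume i: "i \<in> {1..n}" and k: "k \<in> {1..n}"
  have [measurable]: "X i \<in> borel_measurable M" "regr_resid M X k i \<in> borel_measurable M"
    using i k lin_props(1)[OF lin_W[OF i k]] by auto
  show "(\<lambda>z. if k = i then X i (fst z) else regr_resid M X k i (snd z)) \<in> measurable (M \<Otimes>\<^sub>M M) borel"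
    by measurable
qed

lemma law_eq:
  assumes i: "i \<in> {1..n}"
  shows "distr M (PiM {1..n} (\<lambda>_. borel)) (VV i) = distr (M \<Otimes>\<^sub>M M) (PiM {1..n} (\<lambda>_. borel)) (VV' i)"
proof (rule measure_eqI_PiM_finite[where A="\<lambda>_. space (PiM {1..n} (\<lambda>_. borel))"])
  have PP: "prob_space (M \<Otimes>\<^sub>M M)" by (rule prob_space_pair[OF prob_space_axioms prob_space_axioms])
  fix A :: "nat \<Rightarrow> real set" assume A: "\<And>k. k \<in> {1..n} \<Longrightarrow> A k \<in> sets borel"
  have [measurable]: "X i \<in> borel_measurable M" using i by simp
  have Ym[measurable]: "k \<in> {1..n} \<Longrightarrow> regr_resid M X k i \<in> borel_measurable M" for k
    using i lin_props(1)[OF lin_W[OF i]] by auto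
  define S where "S = {\<omega> \<in> space M. \<forall>k\<in>{1..n}. YY i k \<omega> \<in> A k}"
  define S' where "S' = {z \<in> space (M \<Otimes>\<^sub>M M). \<forall>k\<in>{1..n}. (if k = i then X i (fst z) else regr_resid M X k i (snd z)) \<in> A k}"
  have S: "S \<in> sets M"
  proof -
    have "S = VV i -` (Pi\<^sub>E {1..n} A) \<inter> space M"
      unfolding S_def VV_def by (auto simp: PiE_def Pi_def)
    also have "\<dots> \<in> sets M" using A by (intro measurable_sets[OF VV_m[OF i]] sets_PiM_I_finite) auto
    finally show ?thesis .
  qed
  have S': "S' \<in> sets (M \<Otimes>\<^sub>M M)"
  proof -
    have "S' = VV' i -` (Pi\<^sub>E {1..n} A) \<inter> space (M \<Otimes>\<^sub>M M)"
      unfolding S'_def VV'_def by (auto simp: PiE_def Pi_def)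
    also have "\<dots> \<in> sets (M \<Otimes>\<^sub>M M)" using A by (intro measurable_sets[OF VV'_m[OF i]] sets_PiM_I_finite) auto
    finally show ?thesis .
  qed
  have "(LINT \<omega>|M. (1::real) * (\<Prod>k\<in>{1..n}. indicator (A k) (YY i k \<omega>))) = (LINT \<omega>|M. indicator S \<omega>)"
    by (intro Bochner_Integration.integral_cong refl) (simp only: prod_ind[OF finite_atLeastAtMost] mult_1_left, simp add: S_def indicator_def)
  also have "\<dots> = measure M S" using S by simp
  finally have e1: "(LINT \<omega>|M. (1::real) * (\<Prod>k\<in>{1..n}. indicator (A k) (YY i k \<omega>))) = measure M S" .
  have "(LINT z|(M \<Otimes>\<^sub>M M). (1::real) * (\<Prod>k\<in>{1..n}. indicator (A k) (if k = i then X i (fst z) else regr_resid M X k i (snd z)))) = (LINT z|(M \<Otimes>\<^sub>M M). indicator S' z)"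
    by (intro Bochner_Integration.integral_cong refl) (simp only: prod_ind[OF finite_atLeastAtMost] mult_1_left, simp add: S'_def indicator_def)
  also have "\<dots> = measure (M \<Otimes>\<^sub>M M) S'" using S' finite_measure.emeasure_finite[OF prob_space.finite_measure[OF PP]] by simp
  finally have e2: "(LINT z|(M \<Otimes>\<^sub>M M). (1::real) * (\<Prod>k\<in>{1..n}. indicator (A k) (if k = i then X i (fst z) else regr_resid M X k i (snd z)))) = measure (M \<Otimes>\<^sub>M M) S'" .
  have meq: "measure M S = measure (M \<Otimes>\<^sub>M M) S'"
    using box_eq[OF i, of A] A e1 e2 by simp
  have "emeasure (distr M (PiM {1..n} (\<lambda>_. borel)) (VV i)) (Pi\<^sub>E {1..n} A) = emeasure M S"
  proof -
    have "VV i -` (Pi\<^sub>E {1..n} A) \<inter> space M = S" unfolding S_def VV_def by (auto simp: PiE_def Pi_def)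
    then show ?thesis using A VV_m[OF i] by (subst emeasure_distr) (auto intro!: sets_PiM_I_finite)
  qed
  also have "\<dots> = ennreal (measure M S)" by (simp add: emeasure_eq_measure)
  also have "\<dots> = ennreal (measure (M \<Otimes>\<^sub>M M) S')" by (simp add: meq)
  also have "\<dots> = emeasure (M \<Otimes>\<^sub>M M) S'" by (simp add: finite_measure.emeasure_eq_measure[OF prob_space.finite_measure[OF PP]])
  also have "\<dots> = emeasure (distr (M \<Otimes>\<^sub>M M) (PiM {1..n} (\<lambda>_. borel)) (VV' i)) (Pi\<^sub>E {1..n} A)"
  proof -
    have "VV' i -` (Pi\<^sub>E {1..n} A) \<inter> space (M \<Otimes>\<^sub>M M) = S'" unfolding S'_def VV'_def by (auto simp: PiE_def Pi_def)
    then show ?thesis using A VV'_m[OF i] by (subst emeasure_distr) (auto intro!: sets_PiM_I_finite)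
  qed
  finally show "emeasure (distr M (PiM {1..n} (\<lambda>_. borel)) (VV i)) (Pi\<^sub>E {1..n} A) = emeasure (distr (M \<Otimes>\<^sub>M M) (PiM {1..n} (\<lambda>_. borel)) (VV' i)) (Pi\<^sub>E {1..n} A)" .
next
  show "range (\<lambda>_. space (PiM {1..n} (\<lambda>_. borel))) \<subseteq> prod_algebra {1..n} (\<lambda>_. borel)"
    using prod_algebraI_finite[of "{1..n}" "\<lambda>_. UNIV" "\<lambda>_. borel"] by (auto simp: space_PiM)
  show "(\<Union>_::nat. space (PiM {1..n} (\<lambda>_. borel))) = space (PiM {1..n} (\<lambda>_. borel))" by simp
  show "emeasure (distr M (PiM {1..n} (\<lambda>_. borel)) (VV i)) (space (PiM {1..n} (\<lambda>_. borel))) \<noteq> \<infinity>"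
    using i VV_m[OF i] by (subst emeasure_distr) auto
qed (use i VV_m[OF i] VV'_m[OF i] in auto)

end



context GF begin

definition XC :: "nat \<Rightarrow> real \<Rightarrow> nat \<Rightarrow> 'a \<Rightarrow> real" where
  "XC i z j \<omega> = integral\<^sup>L M (X j)
                + covariance M (X j) (X i) / covariance M (X i) (X i) * (z - integral\<^sup>L M (X i))
                + regr_resid M X j i \<omega>"

definition PHI :: "nat \<Rightarrow> nat set \<Rightarrow> real \<Rightarrow> 'a \<Rightarrow> bool" where
  "PHI i J z \<omega> \<longleftrightarrow> (\<forall>j\<in>J. XC i z j \<omega> > z) \<and> (\<forall>l\<in>{1..n} - ({i} \<union> J). XC i z l \<omega> \<le> z)"

lemma cpr_eq: "cond_prob_regr M X n i J z = measure M {\<omega> \<in> space M. PHI i J z \<omega>}"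
  unfolding cond_prob_regr_def PHI_def XC_def Let_def by simp

lemma XC_self: "XC i (X i \<omega>) j \<omega> = X j \<omega>"
  unfolding XC_def regr_resid_def by simp

definition XV :: "nat \<Rightarrow> real \<Rightarrow> nat \<Rightarrow> (nat \<Rightarrow> real) \<Rightarrow> real" where
  "XV i z j v = integral\<^sup>L M (X j)
                + covariance M (X j) (X i) / covariance M (X i) (X i) * (z - integral\<^sup>L M (X i))
                + v j"

definition SS :: "nat \<Rightarrow> nat set \<Rightarrow> real set \<Rightarrow> (nat \<Rightarrow> real) set" where
  "SS i J A = {v \<in> space (PiM {1..n} (\<lambda>_. borel)). v i \<in> A \<and> (\<forall>j\<in>J. XV i (v i) j v > v i) \<and> (\<forall>l\<in>{1..n} - ({i} \<union> J). XV i (v i) l v \<le> v i)}"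

lemma SS_sets:
  assumes i: "i \<in> {1..n}" and J: "J \<subseteq> {1..n}" and A[measurable]: "A \<in> sets borel"
  shows "SS i J A \<in> sets (PiM {1..n} (\<lambda>_. borel))"
proof -
  have comp: "j \<in> {1..n} \<Longrightarrow> (\<lambda>v. v j) \<in> borel_measurable (PiM {1..n} (\<lambda>_. borel :: real measure))" for j
    by (rule measurable_component_singleton)
  have [measurable]: "(\<lambda>v. v i) \<in> borel_measurable (PiM {1..n} (\<lambda>_. borel :: real measure))" using comp[OF i] .
  have p1: "Measurable.pred (PiM {1..n} (\<lambda>_. borel)) (\<lambda>v. \<forall>j\<in>J. XV i (v i) j v > v i)"
  proof (rule pred_intros_finite)
    show "finite J" using J finite_subset by blast
    fix j assume "j \<in> J"
    then have [measurable]: "(\<lambda>v. v j) \<in> borel_measurable (PiM {1..n} (\<lambda>_. borel :: real measure))" using comp J by auto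
    show "Measurable.pred (PiM {1..n} (\<lambda>_. borel)) (\<lambda>v. XV i (v i) j v > v i)"
      unfolding XV_def by measurable
  qed
  have p2: "Measurable.pred (PiM {1..n} (\<lambda>_. borel)) (\<lambda>v. \<forall>l\<in>{1..n} - ({i} \<union> J). XV i (v i) l v \<le> v i)"
  proof (rule pred_intros_finite)
    show "finite ({1..n} - ({i} \<union> J))" by simp
    fix j assume "j \<in> {1..n} - ({i} \<union> J)"
    then have [measurable]: "(\<lambda>v. v j) \<in> borel_measurable (PiM {1..n} (\<lambda>_. borel :: real measure))" using comp by auto
    have "Measurable.pred (PiM {1..n} (\<lambda>_. borel)) (\<lambda>v. \<not> (v i < XV i (v i) j v))"
      unfolding XV_def by measurable
    then show "Measurable.pred (PiM {1..n} (\<lambda>_. borel)) (\<lambda>v. XV i (v i) j v \<le> v i)"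
      by (simp add: not_less)
  qed
  have "Measurable.pred (PiM {1..n} (\<lambda>_. borel)) (\<lambda>v. v i \<in> A \<and> (\<forall>j\<in>J. XV i (v i) j v > v i) \<and> (\<forall>l\<in>{1..n} - ({i} \<union> J). XV i (v i) l v \<le> v i))"
    using p1 p2 by measurable
  then show ?thesis unfolding SS_def by (simp add: pred_def)
qed


lemma PHI_pred:
  fixes N :: "'b measure" and f :: "'b \<Rightarrow> real"
  assumes i: "i \<in> {1..n}" and J: "J \<subseteq> {1..n} - {i}" and fm[measurable]: "f \<in> borel_measurable N"
  shows "Measurable.pred (N \<Otimes>\<^sub>M M) (\<lambda>p. PHI i J (f (fst p)) (snd p))"
proof -
  have Wm: "j \<in> {1..n} \<Longrightarrow> regr_resid M X j i \<in> borel_measurable M" for j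
    using lin_props(1)[OF lin_W[OF i]] by auto
  have p1: "Measurable.pred (N \<Otimes>\<^sub>M M) (\<lambda>p. \<forall>j\<in>J. XC i (f (fst p)) j (snd p) > f (fst p))"
  proof (rule pred_intros_finite)
    show "finite J" using J finite_subset by blast
    fix j assume "j \<in> J"
    then have [measurable]: "regr_resid M X j i \<in> borel_measurable M" using Wm J by auto
    show "Measurable.pred (N \<Otimes>\<^sub>M M) (\<lambda>p. XC i (f (fst p)) j (snd p) > f (fst p))"
      unfolding XC_def by measurable
  qed
  have p2: "Measurable.pred (N \<Otimes>\<^sub>M M) (\<lambda>p. \<forall>l\<in>{1..n} - ({i} \<union> J). XC i (f (fst p)) l (snd p) \<le> f (fst p))"
  proof (rule pred_intros_finite)
    show "finite ({1..n} - ({i} \<union> J))" by simp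
    fix j assume "j \<in> {1..n} - ({i} \<union> J)"
    then have [measurable]: "regr_resid M X j i \<in> borel_measurable M" using Wm by auto
    have "Measurable.pred (N \<Otimes>\<^sub>M M) (\<lambda>p. \<not> (f (fst p) < XC i (f (fst p)) j (snd p)))"
      unfolding XC_def by measurable
    then show "Measurable.pred (N \<Otimes>\<^sub>M M) (\<lambda>p. XC i (f (fst p)) j (snd p) \<le> f (fst p))"
      by (simp add: not_less)
  qed
  show ?thesis unfolding PHI_def using p1 p2 by measurable
qed

lemma g_meas:
  assumes i: "i \<in> {1..n}" and J: "J \<subseteq> {1..n} - {i}"
  shows "(\<lambda>z. emeasure M {\<omega> \<in> space M. PHI i J z \<omega>}) \<in> borel_measurable (lborel :: real measure)"
proof -
  define Q where "Q = {p \<in> space (lborel \<Otimes>\<^sub>M M). PHI i J (fst p) (snd p)}"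
  have "Measurable.pred (lborel \<Otimes>\<^sub>M M) (\<lambda>p. PHI i J (id (fst p)) (snd p))"
    by (rule PHI_pred[OF i J]) simp
  then have Q: "Q \<in> sets (lborel \<Otimes>\<^sub>M M)" unfolding Q_def by (simp add: pred_def)
  have "(\<lambda>z. emeasure M (Pair z -` Q)) \<in> borel_measurable lborel"
    by (rule measurable_emeasure_Pair[OF Q])
  moreover have "Pair z -` Q = {\<omega> \<in> space M. PHI i J z \<omega>}" for z
    unfolding Q_def by (auto simp: space_pair_measure)
  ultimately show ?thesis by simp
qed

lemma XV_VV: "i \<in> {1..n} \<Longrightarrow> j \<in> {1..n} \<Longrightarrow> j \<noteq> i \<Longrightarrow> XV i z j (VV i \<omega>) = XC i z j \<omega>"
  unfolding XV_def XC_def VV_def YY_def by simp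

lemma XV_VV': "i \<in> {1..n} \<Longrightarrow> j \<in> {1..n} \<Longrightarrow> j \<noteq> i \<Longrightarrow> XV i z j (VV' i p) = XC i z j (snd p)"
  unfolding XV_def XC_def VV'_def by simp

lemma term_eq:
  assumes i: "i \<in> {1..n}" and J: "J \<subseteq> {1..n} - {i}" and A[measurable]: "A \<in> sets borel"
  shows "emeasure M {\<omega> \<in> space M. X i \<omega> \<in> A \<and> (\<forall>j\<in>J. X j \<omega> > X i \<omega>) \<and> (\<forall>l\<in>{1..n} - ({i} \<union> J). X l \<omega> \<le> X i \<omega>)}
    = (\<integral>\<^sup>+z. ennreal (normal_density (\<mu> i) (\<sigma> i) z * cond_prob_regr M X n i J z) * indicator A z \<partial>lborel)"
proof -
  have J': "J \<subseteq> {1..n}" using J by auto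
  have S: "SS i J A \<in> sets (PiM {1..n} (\<lambda>_. borel))" by (rule SS_sets[OF i J' A])
  have [measurable]: "X i \<in> borel_measurable M" using i by simp
  have e1: "{\<omega> \<in> space M. X i \<omega> \<in> A \<and> (\<forall>j\<in>J. X j \<omega> > X i \<omega>) \<and> (\<forall>l\<in>{1..n} - ({i} \<union> J). X l \<omega> \<le> X i \<omega>)}
      = VV i -` SS i J A \<inter> space M"
  proof -
    have vi: "VV i \<omega> i = X i \<omega>" for \<omega> unfolding VV_def YY_def using i by simp
    have vs: "VV i \<omega> \<in> space (PiM {1..n} (\<lambda>_. borel))" for \<omega> unfolding VV_def by (simp add: space_PiM)
    have xv: "XV i (X i \<omega>) j (VV i \<omega>) = X j \<omega>" if "j \<in> {1..n}" "j \<noteq> i" for \<omega> j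
      using XV_VV[OF i that] XC_self by simp
    have xJ: "\<forall>j\<in>J. XV i (X i \<omega>) j (VV i \<omega>) = X j \<omega>" for \<omega>
    proof
      fix j assume "j \<in> J" then have "j \<in> {1..n}" "j \<noteq> i" using J by auto
      then show "XV i (X i \<omega>) j (VV i \<omega>) = X j \<omega>" by (rule xv)
    qed
    have xL: "\<forall>j\<in>{1..n} - ({i} \<union> J). XV i (X i \<omega>) j (VV i \<omega>) = X j \<omega>" for \<omega>
    proof
      fix j assume "j \<in> {1..n} - ({i} \<union> J)" then have "j \<in> {1..n}" "j \<noteq> i" by auto
      then show "XV i (X i \<omega>) j (VV i \<omega>) = X j \<omega>" by (rule xv)
    qed
    have c1: "(\<forall>j\<in>J. XV i (X i \<omega>) j (VV i \<omega>) > X i \<omega>) \<longleftrightarrow> (\<forall>j\<in>J. X j \<omega> > X i \<omega>)" for \<omega>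
      using xJ[of \<omega>] by auto
    have c2: "(\<forall>l\<in>{1..n} - ({i} \<union> J). XV i (X i \<omega>) l (VV i \<omega>) \<le> X i \<omega>) \<longleftrightarrow> (\<forall>l\<in>{1..n} - ({i} \<union> J). X l \<omega> \<le> X i \<omega>)" for \<omega>
      using xL[of \<omega>] by auto
    show ?thesis unfolding SS_def using vi vs c1 c2 by auto
  qed
  have PP: "prob_space (M \<Otimes>\<^sub>M M)" by (rule prob_space_pair[OF prob_space_axioms prob_space_axioms])
  have "emeasure M (VV i -` SS i J A \<inter> space M) = emeasure (distr M (PiM {1..n} (\<lambda>_. borel)) (VV i)) (SS i J A)"
    using S VV_m[OF i] by (simp add: emeasure_distr)
  also have "\<dots> = emeasure (distr (M \<Otimes>\<^sub>M M) (PiM {1..n} (\<lambda>_. borel)) (VV' i)) (SS i J A)"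
    unfolding law_eq[OF i] by (rule refl)
  also have "\<dots> = emeasure (M \<Otimes>\<^sub>M M) (VV' i -` SS i J A \<inter> space (M \<Otimes>\<^sub>M M))"
    using S VV'_m[OF i] by (simp add: emeasure_distr)
  also have "\<dots> = (\<integral>\<^sup>+x. emeasure M (Pair x -` (VV' i -` SS i J A \<inter> space (M \<Otimes>\<^sub>M M))) \<partial>M)"
    by (rule emeasure_pair_measure_alt) (use S VV'_m[OF i] in simp)
  also have "\<dots> = (\<integral>\<^sup>+x. indicator A (X i x) * emeasure M {\<omega> \<in> space M. PHI i J (X i x) \<omega>} \<partial>M)"
  proof (rule nn_integral_cong)
    fix x assume x: "x \<in> space M"
    have vi: "VV' i p i = X i (fst p)" for p unfolding VV'_def using i by simp
    have vs: "VV' i p \<in> space (PiM {1..n} (\<lambda>_. borel))" for p unfolding VV'_def by (simp add: space_PiM)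
    have xv: "XV i z j (VV' i p) = XC i z j (snd p)" if "j \<in> {1..n}" "j \<noteq> i" for z p j
      using XV_VV'[OF i that] by simp
    have xJ: "\<forall>j\<in>J. XV i z j (VV' i p) = XC i z j (snd p)" for z p
    proof
      fix j assume "j \<in> J" then have "j \<in> {1..n}" "j \<noteq> i" using J by auto
      then show "XV i z j (VV' i p) = XC i z j (snd p)" by (rule xv)
    qed
    have xL: "\<forall>j\<in>{1..n} - ({i} \<union> J). XV i z j (VV' i p) = XC i z j (snd p)" for z p
    proof
      fix j assume "j \<in> {1..n} - ({i} \<union> J)" then have "j \<in> {1..n}" "j \<noteq> i" by auto
      then show "XV i z j (VV' i p) = XC i z j (snd p)" by (rule xv)
    qed
    have c1: "(\<forall>j\<in>J. XV i z j (VV' i p) > z) \<longleftrightarrow> (\<forall>j\<in>J. XC i z j (snd p) > z)" for z p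
      using xJ[of z p] by auto
    have c2: "(\<forall>l\<in>{1..n} - ({i} \<union> J). XV i z l (VV' i p) \<le> z) \<longleftrightarrow> (\<forall>l\<in>{1..n} - ({i} \<union> J). XC i z l (snd p) \<le> z)" for z p
      using xL[of z p] by auto
    have "Pair x -` (VV' i -` SS i J A \<inter> space (M \<Otimes>\<^sub>M M)) = (if X i x \<in> A then {\<omega> \<in> space M. PHI i J (X i x) \<omega>} else {})"
      unfolding SS_def PHI_def using x vi vs c1 c2 by (auto simp: space_pair_measure)
    then show "emeasure M (Pair x -` (VV' i -` SS i J A \<inter> space (M \<Otimes>\<^sub>M M))) = indicator A (X i x) * emeasure M {\<omega> \<in> space M. PHI i J (X i x) \<omega>}"
      by (simp add: indicator_def)
  qed
  also have "\<dots> = (\<integral>\<^sup>+z. ennreal (normal_density (\<mu> i) (\<sigma> i) z) * (indicator A z * emeasure M {\<omega> \<in> space M. PHI i J z \<omega>}) \<partial>lborel)"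
  proof (rule distributed_nn_integral[OF Xnorm[OF i], symmetric])
    have [measurable]: "(\<lambda>z. emeasure M {\<omega> \<in> space M. PHI i J z \<omega>}) \<in> borel_measurable lborel" by (rule g_meas[OF i J])
    show "(\<lambda>z. indicator A z * emeasure M {\<omega> \<in> space M. PHI i J z \<omega>}) \<in> borel_measurable lborel" by measurable
  qed
  also have "\<dots> = (\<integral>\<^sup>+z. ennreal (normal_density (\<mu> i) (\<sigma> i) z * cond_prob_regr M X n i J z) * indicator A z \<partial>lborel)"
  proof (rule nn_integral_cong)
    fix z :: real
    have "emeasure M {\<omega> \<in> space M. PHI i J z \<omega>} = ennreal (cond_prob_regr M X n i J z)"
      unfolding cpr_eq by (simp add: emeasure_eq_measure)
    then show "ennreal (normal_density (\<mu> i) (\<sigma> i) z) * (indicator A z * emeasure M {\<omega> \<in> space M. PHI i J z \<omega>}) = ennreal (normal_density (\<mu> i) (\<sigma> i) z * cond_prob_regr M X n i J z) * indicator A z"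
      using ennreal_mult[of "normal_density (\<mu> i) (\<sigma> i) z" "cond_prob_regr M X n i J z"]
      by (simp add: cpr_eq mult_ac)
  qed
  finally show ?thesis unfolding e1 .
qed

end



lemma card_filter_map_upt:
  "length (filter P (map x [1..<Suc n])) = card {j\<in>{1..n}. P (x j)}"
proof -
  have "length (filter P (map x [1..<Suc n])) = length (filter (\<lambda>j. P (x j)) [1..<Suc n])"
    by (simp add: filter_map comp_def)
  also have "\<dots> = card (set (filter (\<lambda>j. P (x j)) [1..<Suc n]))"
    by (rule distinct_card[symmetric]) simp
  also have "set (filter (\<lambda>j. P (x j)) [1..<Suc n]) = {j\<in>{1..n}. P (x j)}" by auto
  finally show ?thesis .
qed

lemma sorted_kth_le:
  fixes ys :: "real list"
  assumes s: "sorted ys" and k: "1 \<le> k" "k \<le> length ys"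
  shows "ys ! (k - 1) \<le> t \<longleftrightarrow> k \<le> card {m. m < length ys \<and> ys ! m \<le> t}"
proof
  assume a: "ys ! (k - 1) \<le> t"
  have "{0..<k} \<subseteq> {m. m < length ys \<and> ys ! m \<le> t}"
  proof
    fix m assume "m \<in> {0..<k}"
    then have "m \<le> k - 1" "k - 1 < length ys" using k by auto
    then have "ys ! m \<le> ys ! (k - 1)" using sorted_nth_mono[OF s] by blast
    then show "m \<in> {m. m < length ys \<and> ys ! m \<le> t}" using a \<open>m \<in> {0..<k}\<close> k by auto
  qed
  then show "k \<le> card {m. m < length ys \<and> ys ! m \<le> t}"
    using card_mono[of "{m. m < length ys \<and> ys ! m \<le> t}" "{0..<k}"] by auto
next
  assume c: "k \<le> card {m. m < length ys \<and> ys ! m \<le> t}"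
  show "ys ! (k - 1) \<le> t"
  proof (rule ccontr)
    assume "\<not> ys ! (k - 1) \<le> t"
    then have gt: "ys ! (k - 1) > t" by simp
    have "{m. m < length ys \<and> ys ! m \<le> t} \<subseteq> {0..<k - 1}"
    proof
      fix m assume m: "m \<in> {m. m < length ys \<and> ys ! m \<le> t}"
      show "m \<in> {0..<k - 1}"
      proof (rule ccontr)
        assume "m \<notin> {0..<k - 1}"
        then have "k - 1 \<le> m" by simp
        then have "ys ! (k - 1) \<le> ys ! m" using sorted_nth_mono[OF s] m by blast
        then show False using m gt by simp
      qed
    qed
    then have "card {m. m < length ys \<and> ys ! m \<le> t} \<le> k - 1"
      using card_mono[of "{0..<k - 1}"] by fastforce
    then show False using c k by simp
  qed
qed

lemma order_stat_le:
  assumes k: "1 \<le> k" "k \<le> n"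
  shows "order_stat n k x \<le> t \<longleftrightarrow> k \<le> card {j\<in>{1..n}. x j \<le> t}"
proof -
  define xs where "xs = map x [1..<Suc n]"
  define ys where "ys = sort xs"
  have ly: "length ys = n" unfolding ys_def xs_def by simp
  have "card {j\<in>{1..n}. x j \<le> t} = length (filter (\<lambda>y. y \<le> t) xs)"
    unfolding xs_def by (rule card_filter_map_upt[symmetric])
  also have "\<dots> = length (filter (\<lambda>y. y \<le> t) ys)"
  proof -
    have "mset (filter (\<lambda>y. y \<le> t) ys) = mset (filter (\<lambda>y. y \<le> t) xs)"
      unfolding ys_def by (simp add: mset_filter)
    then show ?thesis by (metis size_mset)
  qed
  also have "\<dots> = card {m. m < length ys \<and> ys ! m \<le> t}"
    by (rule length_filter_conv_card)
  finally have c: "card {j\<in>{1..n}. x j \<le> t} = card {m. m < length ys \<and> ys ! m \<le> t}" .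
  have "order_stat n k x = ys ! (k - 1)" unfolding order_stat_def ys_def xs_def by simp
  then show ?thesis using sorted_kth_le[of ys k t] k ly c by (simp add: ys_def)
qed


definition cnd :: "nat \<Rightarrow> (nat \<Rightarrow> real) \<Rightarrow> nat \<Rightarrow> nat set \<Rightarrow> bool" where
  "cnd n x i J \<longleftrightarrow> (\<forall>j\<in>J. x j > x i) \<and> (\<forall>l\<in>{1..n} - ({i} \<union> J). x l \<le> x i)"

lemma cnd_iff:
  assumes "J \<subseteq> {1..n} - {i}"
  shows "cnd n x i J \<longleftrightarrow> J = {j\<in>{1..n}. x i < x j}"
proof
  assume c: "cnd n x i J"
  show "J = {j\<in>{1..n}. x i < x j}"
  proof
    show "J \<subseteq> {j\<in>{1..n}. x i < x j}" using c assms unfolding cnd_def by auto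
    show "{j\<in>{1..n}. x i < x j} \<subseteq> J"
    proof
      fix l assume l: "l \<in> {j\<in>{1..n}. x i < x j}"
      show "l \<in> J"
      proof (rule ccontr)
        assume "l \<notin> J"
        then have "l \<in> {1..n} - ({i} \<union> J)" using l by auto
        then have "x l \<le> x i" using c unfolding cnd_def by auto
        then show False using l by auto
      qed
    qed
  qed
next
  assume "J = {j\<in>{1..n}. x i < x j}"
  then show "cnd n x i J" unfolding cnd_def by auto
qed

lemma sumJ:
  assumes i: "i \<in> {1..n}"
  shows "(\<Sum>J\<in>{J. J \<subseteq> {1..n} - {i} \<and> card J = n - k}. (if P \<and> cnd n x i J then 1 else 0 :: ennreal))
       = (if P \<and> card {j\<in>{1..n}. x i < x j} = n - k then 1 else 0)"
proof -
  define G where "G = {j\<in>{1..n}. x i < x j}"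
  define S where "S = {J. J \<subseteq> {1..n} - {i} \<and> card J = n - k}"
  have fin: "finite S" unfolding S_def by (rule finite_subset[of _ "Pow ({1..n} - {i})"]) auto
  have "(\<Sum>J\<in>S. (if P \<and> cnd n x i J then 1 else 0 :: ennreal)) = (\<Sum>J\<in>S. (if J = G then (if P then 1 else 0) else 0))"
    by (intro sum.cong refl) (auto simp: S_def cnd_iff G_def)
  also have "\<dots> = (if G \<in> S then (if P then 1 else 0) else 0)"
    using fin by (simp add: sum.delta')
  also have "\<dots> = (if P \<and> card G = n - k then 1 else 0)"
    unfolding S_def G_def by auto
  finally show ?thesis unfolding S_def G_def .
qed

lemma rank_unique:
  assumes inj: "inj_on x {1..n}" and k: "1 \<le> k" "k \<le> n"
  obtains i where "i \<in> {1..n}" "card {j\<in>{1..n}. x j \<le> x i} = k"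
    "\<And>i'. i' \<in> {1..n} \<Longrightarrow> card {j\<in>{1..n}. x j \<le> x i'} = k \<Longrightarrow> i' = i"
    "order_stat n k x = x i"
proof -
  define r where "r i = card {j\<in>{1..n}. x j \<le> x i}" for i
  have rmono: "r a < r b" if "a \<in> {1..n}" "b \<in> {1..n}" "x a < x b" for a b
  proof -
    have sub: "{j\<in>{1..n}. x j \<le> x a} \<subseteq> {j\<in>{1..n}. x j \<le> x b}" using that by auto
    have "b \<in> {j\<in>{1..n}. x j \<le> x b}" "b \<notin> {j\<in>{1..n}. x j \<le> x a}" using that by auto
    then have "{j\<in>{1..n}. x j \<le> x a} \<subset> {j\<in>{1..n}. x j \<le> x b}" using sub by blast
    then show ?thesis unfolding r_def by (intro psubset_card_mono) auto
  qed
  have rinj: "inj_on r {1..n}"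
  proof (rule inj_onI)
    fix a b assume a: "a \<in> {1..n}" and b: "b \<in> {1..n}" and e: "r a = r b"
    show "a = b"
    proof (rule ccontr)
      assume "a \<noteq> b"
      then have "x a \<noteq> x b" using inj a b by (auto dest: inj_onD)
      then have "x a < x b \<or> x b < x a" by auto
      then show False using rmono[OF a b] rmono[OF b a] e by auto
    qed
  qed
  have rrange: "r ` {1..n} \<subseteq> {1..n}"
  proof
    fix y assume "y \<in> r ` {1..n}"
    then obtain a where a: "a \<in> {1..n}" "y = r a" by auto
    have "a \<in> {j\<in>{1..n}. x j \<le> x a}" using a by auto
    then have "0 < card {j\<in>{1..n}. x j \<le> x a}" by (subst card_gt_0_iff) auto
    then have "1 \<le> r a" unfolding r_def by simp
    moreover have "card {j\<in>{1..n}. x j \<le> x a} \<le> card {1..n}" by (rule card_mono) auto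
    then have "r a \<le> n" unfolding r_def by simp
    ultimately show "y \<in> {1..n}" using a by auto
  qed
  have "r ` {1..n} = {1..n}"
    using rrange card_image[OF rinj] by (intro card_subset_eq) auto
  then obtain i where i: "i \<in> {1..n}" "r i = k" using k by (metis atLeastAtMost_iff imageE)
  have uniq: "i' = i" if "i' \<in> {1..n}" "r i' = k" for i'
    using rinj i that by (auto dest: inj_onD)
  have os: "order_stat n k x \<le> t \<longleftrightarrow> x i \<le> t" for t
  proof -
    have "k \<le> card {j\<in>{1..n}. x j \<le> t} \<longleftrightarrow> x i \<le> t"
    proof
      assume c: "k \<le> card {j\<in>{1..n}. x j \<le> t}"
      show "x i \<le> t"
      proof (rule ccontr)
        assume "\<not> x i \<le> t"
        then have "{j\<in>{1..n}. x j \<le> t} \<subseteq> {j\<in>{1..n}. x j \<le> x i} - {i}" by auto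
        then have "card {j\<in>{1..n}. x j \<le> t} \<le> card ({j\<in>{1..n}. x j \<le> x i} - {i})"
          by (intro card_mono) auto
        also have "\<dots> = k - 1" using i by (simp add: r_def)
        finally show False using c k by simp
      qed
    next
      assume "x i \<le> t"
      then have "{j\<in>{1..n}. x j \<le> x i} \<subseteq> {j\<in>{1..n}. x j \<le> t}" by auto
      then have "card {j\<in>{1..n}. x j \<le> x i} \<le> card {j\<in>{1..n}. x j \<le> t}" by (intro card_mono) auto
      then show "k \<le> card {j\<in>{1..n}. x j \<le> t}" using i by (simp add: r_def)
    qed
    then show ?thesis using order_stat_le[OF k] by simp
  qed
  have "order_stat n k x = x i"
    using os[of "x i"] os[of "order_stat n k x"] by simp
  then show ?thesis using that i uniq unfolding r_def by blast
qed

lemma sum_all: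
  assumes inj: "inj_on x {1..n}" and k: "1 \<le> k" "k \<le> n"
  shows "(\<Sum>i\<in>{1..n}. \<Sum>J\<in>{J. J \<subseteq> {1..n} - {i} \<and> card J = n - k}. (if x i \<in> A \<and> cnd n x i J then 1 else 0 :: ennreal))
       = (if order_stat n k x \<in> A then 1 else 0)"
proof -
  obtain i0 where i0: "i0 \<in> {1..n}" "card {j\<in>{1..n}. x j \<le> x i0} = k"
    and u: "\<And>i'. i' \<in> {1..n} \<Longrightarrow> card {j\<in>{1..n}. x j \<le> x i'} = k \<Longrightarrow> i' = i0"
    and os: "order_stat n k x = x i0"
    using rank_unique[OF inj k] by blast
  have cc: "card {j\<in>{1..n}. x i < x j} = n - card {j\<in>{1..n}. x j \<le> x i}" if "i \<in> {1..n}" for i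
  proof -
    have "{j\<in>{1..n}. x i < x j} = {1..n} - {j\<in>{1..n}. x j \<le> x i}" by auto
    then have "card {j\<in>{1..n}. x i < x j} = card ({1..n} - {j\<in>{1..n}. x j \<le> x i})" by simp
    also have "\<dots> = n - card {j\<in>{1..n}. x j \<le> x i}" by (subst card_Diff_subset) auto
    finally show ?thesis .
  qed
  have le: "card {j\<in>{1..n}. x j \<le> x i} \<le> n" for i
  proof -
    have "card {j\<in>{1..n}. x j \<le> x i} \<le> card {1..n}" by (rule card_mono) auto
    then show ?thesis by simp
  qed
  have "(\<Sum>i\<in>{1..n}. \<Sum>J\<in>{J. J \<subseteq> {1..n} - {i} \<and> card J = n - k}. (if x i \<in> A \<and> cnd n x i J then 1 else 0 :: ennreal))
      = (\<Sum>i\<in>{1..n}. (if x i \<in> A \<and> card {j\<in>{1..n}. x i < x j} = n - k then 1 else 0))"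
  proof (intro sum.cong refl)
    fix i assume "i \<in> {1..n}"
    then show "(\<Sum>J\<in>{J. J \<subseteq> {1..n} - {i} \<and> card J = n - k}. (if x i \<in> A \<and> cnd n x i J then 1 else 0 :: ennreal)) = (if x i \<in> A \<and> card {j\<in>{1..n}. x i < x j} = n - k then 1 else 0)"
      by (rule sumJ)
  qed
  also have "\<dots> = (\<Sum>i\<in>{1..n}. (if i = i0 then (if x i0 \<in> A then 1 else 0) else 0))"
  proof (intro sum.cong refl)
    fix i assume i: "i \<in> {1..n}"
    have e: "card {j\<in>{1..n}. x i < x j} = n - k \<longleftrightarrow> card {j\<in>{1..n}. x j \<le> x i} = k"
    proof -
      have "n - card {j\<in>{1..n}. x j \<le> x i} = n - k \<longleftrightarrow> card {j\<in>{1..n}. x j \<le> x i} = k"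
        using le[of i] k by linarith
      then show ?thesis using cc[OF i] by simp
    qed
    show "(if x i \<in> A \<and> card {j\<in>{1..n}. x i < x j} = n - k then 1 else 0) = (if i = i0 then (if x i0 \<in> A then 1 else 0) else (0::ennreal))"
    proof (cases "i = i0")
      case True
      then show ?thesis using e i0(2) by simp
    next
      case False
      then have "card {j\<in>{1..n}. x j \<le> x i} \<noteq> k" using u[OF i] by blast
      then show ?thesis using e False by simp
    qed
  qed
  also have "\<dots> = (if x i0 \<in> A then 1 else 0)" using i0 by simp
  finally show ?thesis using os by simp
qed





lemma nd_std: "\<sigma> > 0 \<Longrightarrow> normal_density \<mu> \<sigma> z = 1 / \<sigma> * std_normal_density ((z - \<mu>) / \<sigma>)"
  unfolding normal_density_def by (simp add: real_sqrt_mult power_divide field_simps)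

lemma card_ge_iff_subset:
  fixes P :: "nat \<Rightarrow> bool"
  shows "k \<le> card {j\<in>{1..n}. P j} \<longleftrightarrow> (\<exists>S\<in>{S. S \<subseteq> {1..n} \<and> card S = k}. \<forall>j\<in>S. P j)"
proof
  assume "k \<le> card {j\<in>{1..n}. P j}"
  then obtain S where S: "S \<subseteq> {j\<in>{1..n}. P j}" "card S = k" by (meson obtain_subset_with_card_n)
  then have "S \<in> {S. S \<subseteq> {1..n} \<and> card S = k}" "\<forall>j\<in>S. P j" by auto
  then show "\<exists>S\<in>{S. S \<subseteq> {1..n} \<and> card S = k}. \<forall>j\<in>S. P j" by blast
next
  assume "\<exists>S\<in>{S. S \<subseteq> {1..n} \<and> card S = k}. \<forall>j\<in>S. P j"
  then obtain S where S: "S \<subseteq> {1..n}" "card S = k" "\<forall>j\<in>S. P j" by blast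
  then have "S \<subseteq> {j\<in>{1..n}. P j}" by blast
  then have "card S \<le> card {j\<in>{1..n}. P j}" by (intro card_mono) auto
  then show "k \<le> card {j\<in>{1..n}. P j}" using S by simp
qed

context GF begin

lemma Y_meas:
  assumes k: "1 \<le> k" "k \<le> n"
  shows "(\<lambda>\<omega>. order_stat n k (\<lambda>i. X i \<omega>)) \<in> borel_measurable M"
proof (subst borel_measurable_iff_le, intro allI)
  fix t
  have e: "{w \<in> space M. order_stat n k (\<lambda>i. X i w) \<le> t} = {w \<in> space M. \<exists>S\<in>{S. S \<subseteq> {1..n} \<and> card S = k}. \<forall>j\<in>S. X j w \<le> t}"
  proof -
    have "order_stat n k (\<lambda>i. X i w) \<le> t \<longleftrightarrow> (\<exists>S\<in>{S. S \<subseteq> {1..n} \<and> card S = k}. \<forall>j\<in>S. X j w \<le> t)" for w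
    proof -
      have "order_stat n k (\<lambda>i. X i w) \<le> t \<longleftrightarrow> k \<le> card {j\<in>{1..n}. X j w \<le> t}"
        by (rule order_stat_le[OF k])
      also have "\<dots> \<longleftrightarrow> (\<exists>S\<in>{S. S \<subseteq> {1..n} \<and> card S = k}. \<forall>j\<in>S. X j w \<le> t)"
        by (rule card_ge_iff_subset)
      finally show ?thesis .
    qed
    then show ?thesis by blast
  qed
  have "Measurable.pred M (\<lambda>w. \<exists>S\<in>{S. S \<subseteq> {1..n} \<and> card S = k}. \<forall>j\<in>S. X j w \<le> t)"
  proof (rule pred_intros_finite)
    show "finite {S. S \<subseteq> {1..n} \<and> card S = k}" by (rule finite_subset[of _ "Pow {1..n}"]) auto
    fix S assume S: "S \<in> {S. S \<subseteq> {1..n} \<and> card S = k}"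
    show "Measurable.pred M (\<lambda>w. \<forall>j\<in>S. X j w \<le> t)"
    proof (rule pred_intros_finite)
      show "finite S" using S finite_subset by auto
      fix j assume "j \<in> S"
      then have [measurable]: "X j \<in> borel_measurable M" using S by auto
      show "Measurable.pred M (\<lambda>w. X j w \<le> t)" by measurable
    qed
  qed
  then show "{w \<in> space M. order_stat n k (\<lambda>i. X i w) \<le> t} \<in> sets M" unfolding e by (simp add: pred_def)
qed

lemma AE_inj: "AE \<omega> in M. inj_on (\<lambda>j. X j \<omega>) {1..n}"
proof -
  have "AE \<omega> in M. \<forall>i\<in>{1..n}. \<forall>j\<in>{1..n}. i \<noteq> j \<longrightarrow> X i \<omega> \<noteq> X j \<omega>"
    by (intro AE_finite_allI) (auto intro: ties)
  then show ?thesis by eventually_elim (auto simp: inj_on_def)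
qed

lemma cpr_meas:
  assumes i: "i \<in> {1..n}" and J: "J \<subseteq> {1..n} - {i}"
  shows "cond_prob_regr M X n i J \<in> borel_measurable lborel"
proof -
  have "cond_prob_regr M X n i J = (\<lambda>z. enn2real (emeasure M {\<omega> \<in> space M. PHI i J z \<omega>}))"
    by (auto simp: cpr_eq measure_def)
  also have "\<dots> \<in> borel_measurable lborel" using g_meas[OF i J] by measurable
  finally show ?thesis .
qed


lemma E_sets:
  assumes i: "i \<in> {1..n}" and J: "J \<subseteq> {1..n} - {i}" and A[measurable]: "A \<in> sets borel"
  shows "{\<omega> \<in> space M. X i \<omega> \<in> A \<and> (\<forall>j\<in>J. X j \<omega> > X i \<omega>) \<and> (\<forall>l\<in>{1..n} - ({i} \<union> J). X l \<omega> \<le> X i \<omega>)} \<in> sets M"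
proof -
  have [measurable]: "X i \<in> borel_measurable M" using i by simp
  have p1: "Measurable.pred M (\<lambda>\<omega>. \<forall>j\<in>J. X j \<omega> > X i \<omega>)"
  proof (rule pred_intros_finite)
    show "finite J" using J finite_subset by blast
    fix j assume "j \<in> J"
    then have [measurable]: "X j \<in> borel_measurable M" using J by auto
    show "Measurable.pred M (\<lambda>\<omega>. X j \<omega> > X i \<omega>)" by measurable
  qed
  have p2: "Measurable.pred M (\<lambda>\<omega>. \<forall>l\<in>{1..n} - ({i} \<union> J). X l \<omega> \<le> X i \<omega>)"
  proof (rule pred_intros_finite)
    show "finite ({1..n} - ({i} \<union> J))" by simp
    fix j assume "j \<in> {1..n} - ({i} \<union> J)"
    then have [measurable]: "X j \<in> borel_measurable M" by auto
    show "Measurable.pred M (\<lambda>\<omega>. X j \<omega> \<le> X i \<omega>)" by measurable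
  qed
  have "Measurable.pred M (\<lambda>\<omega>. X i \<omega> \<in> A \<and> (\<forall>j\<in>J. X j \<omega> > X i \<omega>) \<and> (\<forall>l\<in>{1..n} - ({i} \<union> J). X l \<omega> \<le> X i \<omega>))"
    using p1 p2 by measurable
  then show ?thesis by (simp add: pred_def)
qed

end

theorem proposition3:
  fixes M :: "'a measure" and X :: "nat \<Rightarrow> 'a \<Rightarrow> real"
    and \<mu> \<sigma> :: "nat \<Rightarrow> real" and n k :: nat
  assumes "prob_space M"
    and "jointly_gaussian M {1..n} X"
    and "\<forall>i\<in>{1..n}. integral\<^sup>L M (X i) = \<mu> i"
    and "\<forall>i\<in>{1..n}. \<sigma> i > 0 \<and> covariance M (X i) (X i) = (\<sigma> i)\<^sup>2"
    and "\<forall>i\<in>{1..n}. \<forall>j\<in>{1..n}. i \<noteq> j \<longrightarrow> correlation M (X i) (X j) < 1"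
    and "1 \<le> k" and "k \<le> n"
  shows "distributed M lborel (\<lambda>\<omega>. order_stat n k (\<lambda>i. X i \<omega>))
           (\<lambda>z. ennreal (\<Sum>i\<in>{1..n}. \<Sum>J\<in>{J. J \<subseteq> {1..n} - {i} \<and> card J = n - k}.
              1 / \<sigma> i * std_normal_density ((z - \<mu> i) / \<sigma> i) * cond_prob_regr M X n i J z))"
proof -
  have "GF M X n \<mu> \<sigma>" unfolding GF_def GF_axioms_def using assms by auto
  then interpret GF M X n \<mu> \<sigma> .
  have k: "1 \<le> k" "k \<le> n" using assms by auto
  define Y where "Y \<omega> = order_stat n k (\<lambda>i. X i \<omega>)" for \<omega>
  define JJ where "JJ i = {J. J \<subseteq> {1..n} - {i} \<and> card J = n - k}" for i
  define g where "g i J z = normal_density (\<mu> i) (\<sigma> i) z * cond_prob_regr M X n i J z" for i J z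
  define f where "f z = (\<Sum>i\<in>{1..n}. \<Sum>J\<in>JJ i. 1 / \<sigma> i * std_normal_density ((z - \<mu> i) / \<sigma> i) * cond_prob_regr M X n i J z)" for z
  define E where "E A i J = {\<omega> \<in> space M. X i \<omega> \<in> A \<and> (\<forall>j\<in>J. X j \<omega> > X i \<omega>) \<and> (\<forall>l\<in>{1..n} - ({i} \<union> J). X l \<omega> \<le> X i \<omega>)}" for A i J
  have finJJ: "finite (JJ i)" for i unfolding JJ_def by (rule finite_subset[of _ "Pow {1..n}"]) auto
  have JJsub: "J \<in> JJ i \<Longrightarrow> J \<subseteq> {1..n} - {i}" for i J unfolding JJ_def by auto
  have fg: "f z = (\<Sum>i\<in>{1..n}. \<Sum>J\<in>JJ i. g i J z)" for z
    unfolding f_def g_def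
  proof (rule sum.cong[OF refl], rule sum.cong[OF refl])
    fix i J assume i: "i \<in> {1..n}"
    then have pos: "\<sigma> i > 0" using sig by auto
    show "1 / \<sigma> i * std_normal_density ((z - \<mu> i) / \<sigma> i) * cond_prob_regr M X n i J z = normal_density (\<mu> i) (\<sigma> i) z * cond_prob_regr M X n i J z"
      by (simp only: nd_std[OF pos, of "\<mu> i" z])
  qed
  have gnn: "0 \<le> g i J z" for i J z unfolding g_def cpr_eq by simp
  have Ym[measurable]: "Y \<in> borel_measurable M" unfolding Y_def by (rule Y_meas[OF k])
  have gm[measurable]: "g i J \<in> borel_measurable lborel" if "i \<in> {1..n}" "J \<in> JJ i" for i J
  proof -
    have [measurable]: "cond_prob_regr M X n i J \<in> borel_measurable lborel" by (rule cpr_meas[OF that(1) JJsub[OF that(2)]])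
    show ?thesis unfolding g_def by measurable
  qed
  have fm: "f \<in> borel_measurable lborel"
    unfolding fg[abs_def] by (intro borel_measurable_sum) (auto intro: gm)
  have "distr M lborel Y = density lborel (\<lambda>z. ennreal (f z))"
  proof (rule measure_eqI)
    show "sets (distr M lborel Y) = sets (density lborel (\<lambda>z. ennreal (f z)))" by simp
    fix A assume "A \<in> sets (distr M lborel Y)"
    then have A[measurable]: "A \<in> sets borel" by simp
    have Esets: "E A i J \<in> sets M" if "i \<in> {1..n}" "J \<in> JJ i" for i J
      unfolding E_def by (rule E_sets[OF that(1) JJsub[OF that(2)] A])
    have "emeasure (distr M lborel Y) A = emeasure M (Y -` A \<inter> space M)"
      by (rule emeasure_distr) auto
    also have "\<dots> = (\<integral>\<^sup>+\<omega>. indicator (Y -` A \<inter> space M) \<omega> \<partial>M)"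
      by (rule nn_integral_indicator[symmetric]) simp
    also have "\<dots> = (\<integral>\<^sup>+\<omega>. (\<Sum>i\<in>{1..n}. \<Sum>J\<in>JJ i. indicator (E A i J) \<omega>) \<partial>M)"
    proof (rule nn_integral_cong_AE)
      show "AE \<omega> in M. (indicator (Y -` A \<inter> space M) \<omega> :: ennreal) = (\<Sum>i\<in>{1..n}. \<Sum>J\<in>JJ i. indicator (E A i J) \<omega>)"
        using AE_inj AE_space
      proof eventually_elim
        case (elim \<omega>)
        have "indicator (Y -` A \<inter> space M) \<omega> = (if Y \<omega> \<in> A then 1 else (0::ennreal))"
          using elim by (simp add: indicator_def)
        also have "\<dots> = (\<Sum>i\<in>{1..n}. \<Sum>J\<in>JJ i. (if X i \<omega> \<in> A \<and> cnd n (\<lambda>j. X j \<omega>) i J then 1 else 0 :: ennreal))"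
          unfolding Y_def JJ_def by (rule sum_all[OF elim(1) k, symmetric])
        also have "\<dots> = (\<Sum>i\<in>{1..n}. \<Sum>J\<in>JJ i. indicator (E A i J) \<omega>)"
        proof (rule sum.cong[OF refl], rule sum.cong[OF refl])
          fix i J
          have "\<omega> \<in> E A i J \<longleftrightarrow> X i \<omega> \<in> A \<and> cnd n (\<lambda>j. X j \<omega>) i J"
            using elim(2) unfolding E_def cnd_def by simp
          then show "(if X i \<omega> \<in> A \<and> cnd n (\<lambda>j. X j \<omega>) i J then 1 else 0 :: ennreal) = indicator (E A i J) \<omega>"
            by (simp add: indicator_def)
        qed
        finally show ?case by simp
      qed
    qed
    also have "\<dots> = (\<Sum>i\<in>{1..n}. \<Sum>J\<in>JJ i. emeasure M (E A i J))"
    proof -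
      have "(\<integral>\<^sup>+\<omega>. (\<Sum>i\<in>{1..n}. \<Sum>J\<in>JJ i. indicator (E A i J) \<omega>) \<partial>M) = (\<Sum>i\<in>{1..n}. (\<integral>\<^sup>+\<omega>. (\<Sum>J\<in>JJ i. indicator (E A i J) \<omega>) \<partial>M))"
        using Esets by (intro nn_integral_sum) (auto intro!: borel_measurable_sum)
      also have "\<dots> = (\<Sum>i\<in>{1..n}. \<Sum>J\<in>JJ i. (\<integral>\<^sup>+\<omega>. indicator (E A i J) \<omega> \<partial>M))"
        using Esets by (intro sum.cong refl nn_integral_sum) auto
      also have "\<dots> = (\<Sum>i\<in>{1..n}. \<Sum>J\<in>JJ i. emeasure M (E A i J))"
        using Esets by (intro sum.cong refl nn_integral_indicator) auto
      finally show ?thesis .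
    qed
    also have "\<dots> = (\<Sum>i\<in>{1..n}. \<Sum>J\<in>JJ i. (\<integral>\<^sup>+z. ennreal (g i J z) * indicator A z \<partial>lborel))"
    proof (intro sum.cong refl)
      fix i J assume i: "i \<in> {1..n}" and J: "J \<in> JJ i"
      show "emeasure M (E A i J) = (\<integral>\<^sup>+z. ennreal (g i J z) * indicator A z \<partial>lborel)"
        unfolding E_def g_def by (rule term_eq[OF i JJsub[OF J] A])
    qed
    also have "\<dots> = (\<integral>\<^sup>+z. (\<Sum>i\<in>{1..n}. \<Sum>J\<in>JJ i. ennreal (g i J z) * indicator A z) \<partial>lborel)"
    proof -
      have "(\<integral>\<^sup>+z. (\<Sum>i\<in>{1..n}. \<Sum>J\<in>JJ i. ennreal (g i J z) * indicator A z) \<partial>lborel) = (\<Sum>i\<in>{1..n}. (\<integral>\<^sup>+z. (\<Sum>J\<in>JJ i. ennreal (g i J z) * indicator A z) \<partial>lborel))"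
        by (intro nn_integral_sum) (auto intro!: borel_measurable_sum)
      also have "\<dots> = (\<Sum>i\<in>{1..n}. \<Sum>J\<in>JJ i. (\<integral>\<^sup>+z. ennreal (g i J z) * indicator A z \<partial>lborel))"
        by (intro sum.cong refl nn_integral_sum) auto
      finally show ?thesis by simp
    qed
    also have "\<dots> = (\<integral>\<^sup>+z. ennreal (f z) * indicator A z \<partial>lborel)"
    proof (rule nn_integral_cong)
      fix z
      have "(\<Sum>i\<in>{1..n}. \<Sum>J\<in>JJ i. ennreal (g i J z) * indicator A z) = (\<Sum>i\<in>{1..n}. \<Sum>J\<in>JJ i. ennreal (g i J z)) * indicator A z"
        by (simp add: sum_distrib_right)
      also have "(\<Sum>i\<in>{1..n}. \<Sum>J\<in>JJ i. ennreal (g i J z)) = ennreal (f z)"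
        unfolding fg using gnn by (simp add: sum_nonneg)
      finally show "(\<Sum>i\<in>{1..n}. \<Sum>J\<in>JJ i. ennreal (g i J z) * indicator A z) = ennreal (f z) * indicator A z" .
    qed
    also have "\<dots> = emeasure (density lborel (\<lambda>z. ennreal (f z))) A"
      using fm by (subst emeasure_density) auto
    finally show "emeasure (distr M lborel Y) A = emeasure (density lborel (\<lambda>z. ennreal (f z))) A" .
  qed
  then have "distributed M lborel Y (\<lambda>z. ennreal (f z))"
    unfolding distributed_def using fm Ym by auto
  then show ?thesis unfolding Y_def f_def JJ_def .
qed


end
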